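(* Let $d=2$ or $d$ an odd prime, let $t\ge1$, let $V$ be a unitary on $(\mathbb{C}^d)^{\otimes t}$ in the third level of the Clifford hierarchy, and let $|\phi\rangle$ be a pure stabilizer state on $(\mathbb{C}^d)^{\otimes t}$. Then $|\psi\rangle=V|\phi\rangle$ satisfies $D_{\min,\mathbb{F}_{\rm STAB}}(\psi^{\otimes n})=D_{\max,\mathbb{F}_{\rm STAB}}(\psi^{\otimes n})$ for every integer $n\ge1$.
   Context: $\log$ base 2. On $\mathbb{C}^d$, $X|j\rangle=|j+1\bmod d\rangle$, $Z|j\rangle=e^{2\pi ij/d}|j\rangle$; the multi-qudit (generalized) Pauli group is generated by tensor products of powers of $X$ and $Z$ (with phases). The Clifford group consists of unitaries that map the Pauli group to itself under conjugation (up to phases). The third level of the Clifford hierarchy consists of unitaries $V$ with $VPV^\dagger$ Clifford for every Pauli operator $P$. Pure stabilizer states are states $C|0\rangle^{\otimes m}$ with $C$ Clifford, and $\mathbb{F}_{\rm STAB}$ is the convex hull of pure stabilizer states on the relevant number of qudits (here $tn$). $D_{\min,\mathbb{F}}(\rho)=\inf_{\sigma\in\mathbb{F}}(-\log\mathrm{Tr}[\Pi_\rho\sigma])$; $D_{\max,\mathbb{F}}(\rho)=\inf\{\log(1+s):\frac{\rho+s\tau}{1+s}\in\mathbb{F},\tau\text{ a state}\}$. *)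

theory Defs
  imports Complex_Main "Jordan_Normal_Form.Matrix" "HOL-Library.Extended_Real"
begin

definition adj :: "complex mat \<Rightarrow> complex mat" where
  "adj A = mat (dim_col A) (dim_row A) (\<lambda>(i,j). cnj (A $$ (j,i)))"

definition tr :: "complex mat \<Rightarrow> complex" where
  "tr A = (\<Sum>i<dim_row A. A $$ (i,i))"

definition unitary :: "nat \<Rightarrow> complex mat \<Rightarrow> bool" where
  "unitary N U \<longleftrightarrow> U \<in> carrier_mat N N \<and> U * adj U = 1\<^sub>m N \<and> adj U * U = 1\<^sub>m N"

definition kron :: "complex mat \<Rightarrow> complex mat \<Rightarrow> complex mat" where
  "kron A B = mat (dim_row A * dim_row B) (dim_col A * dim_col B)
     (\<lambda>(i,j). A $$ (i div dim_row B, j div dim_col B) * B $$ (i mod dim_row B, j mod dim_col B))"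

fun kron_pow :: "complex mat \<Rightarrow> nat \<Rightarrow> complex mat" where
  "kron_pow A 0 = 1\<^sub>m 1"
| "kron_pow A (Suc n) = kron A (kron_pow A n)"

definition proj_vec :: "complex vec \<Rightarrow> complex mat" where
  "proj_vec v = mat (dim_vec v) (dim_vec v) (\<lambda>(i,j). v $ i * cnj (v $ j))"

definition psd :: "nat \<Rightarrow> complex mat \<Rightarrow> bool" where
  "psd N A \<longleftrightarrow> A \<in> carrier_mat N N \<and>
     (\<forall>v \<in> carrier_vec N. let q = (\<Sum>i<N. cnj (v $ i) * (A *\<^sub>v v) $ i) in Im q = 0 \<and> Re q \<ge> 0)"

definition is_state :: "nat \<Rightarrow> complex mat \<Rightarrow> bool" where
  "is_state N \<rho> \<longleftrightarrow> psd N \<rho> \<and> tr \<rho> = 1"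

definition supp_proj :: "nat \<Rightarrow> complex mat \<Rightarrow> complex mat" where
  "supp_proj N \<rho> = (THE P. P \<in> carrier_mat N N \<and> adj P = P \<and> P * P = P \<and>
      {P *\<^sub>v x | x. x \<in> carrier_vec N} = {\<rho> *\<^sub>v x | x. x \<in> carrier_vec N})"

definition X_op :: "nat \<Rightarrow> complex mat" where
  "X_op d = mat d d (\<lambda>(i,j). if i = (j + 1) mod d then 1 else 0)"

definition Z_op :: "nat \<Rightarrow> complex mat" where
  "Z_op d = mat d d (\<lambda>(i,j). if i = j then exp (2 * pi * \<i> * of_nat j / of_nat d) else 0)"

fun pauli_string :: "nat \<Rightarrow> (nat \<times> nat) list \<Rightarrow> complex mat" where
  "pauli_string d [] = 1\<^sub>m 1"
| "pauli_string d ((a,b) # ps) = kron (X_op d ^\<^sub>m a * Z_op d ^\<^sub>m b) (pauli_string d ps)"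

definition pauli_group :: "nat \<Rightarrow> nat \<Rightarrow> complex mat set" where
  "pauli_group d m = {c \<cdot>\<^sub>m pauli_string d ps | c ps. cmod c = 1 \<and> length ps = m}"

definition clifford :: "nat \<Rightarrow> nat \<Rightarrow> complex mat set" where
  "clifford d m = {U. unitary (d ^ m) U \<and>
     (\<forall>P \<in> pauli_group d m. U * P * adj U \<in> pauli_group d m)}"

definition clifford_level3 :: "nat \<Rightarrow> nat \<Rightarrow> complex mat set" where
  "clifford_level3 d m = {V. unitary (d ^ m) V \<and>
     (\<forall>P \<in> pauli_group d m. V * P * adj V \<in> clifford d m)}"

definition stab_vecs :: "nat \<Rightarrow> nat \<Rightarrow> complex vec set" where
  "stab_vecs d m = {C *\<^sub>v unit_vec (d ^ m) 0 | C. C \<in> clifford d m}"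

definition F_STAB :: "nat \<Rightarrow> nat \<Rightarrow> complex mat set" where
  "F_STAB d m = {\<sigma>. \<exists>(K::nat) p vs. (\<forall>k<K. p k \<ge> (0::real) \<and> vs k \<in> stab_vecs d m) \<and>
      (\<Sum>k<K. p k) = 1 \<and>
      \<sigma> = mat (d ^ m) (d ^ m) (\<lambda>(i,j). \<Sum>k<K. of_real (p k) * proj_vec (vs k) $$ (i,j))}"

definition D_min :: "nat \<Rightarrow> complex mat set \<Rightarrow> complex mat \<Rightarrow> ereal" where
  "D_min N F \<rho> = (INF \<sigma>\<in>F. (let q = Re (tr (supp_proj N \<rho> * \<sigma>)) in
      if q > 0 then ereal (- log 2 q) else \<infinity>))"

definition D_max :: "nat \<Rightarrow> complex mat set \<Rightarrow> complex mat \<Rightarrow> ereal" where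
  "D_max N F \<rho> = (INF s\<in>{s::real. s \<ge> 0 \<and> (\<exists>\<tau>. is_state N \<tau> \<and>
        (1 / (1 + s)) \<cdot>\<^sub>m (\<rho> + of_real s \<cdot>\<^sub>m \<tau>) \<in> F)}. ereal (log 2 (1 + s)))"

end

theory Submission
  imports Defs
begin


lemma dm1: "(i::nat) div c div b = i div (b*c)"
  by (metis div_mult2_eq mult.commute)
lemma dm2: "(i::nat) div c mod b = i mod (b*c) div c"
proof (cases "c = 0")
  case False
  have "i mod (c*b) = c*(i div c mod b) + i mod c" by (rule mod_mult2_eq)
  then show ?thesis using False by (simp add: mult.commute)
qed simp
lemma dm3: "(i::nat) mod c = i mod (b*c) mod c"
  by (simp add: mod_mod_cancel)
lemma sum_div_mod_split:
  "(\<Sum>k<b*e. g k) = (\<Sum>i<b. \<Sum>j<e. g (i*e+j::nat))"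
proof -
  have "(\<Sum>k<b*e. g k) = (\<Sum>i<b. sum g {i*e..<i*e+e})" by (rule sum.nat_group[symmetric])
  also have "\<dots> = (\<Sum>i<b. \<Sum>j<e. g (i*e+j))"
  proof (rule sum.cong[OF refl])
    fix i
    have "sum g {i*e..<i*e+e} = sum (\<lambda>j. g (j + i*e)) {0..<e}"
      using sum.shift_bounds_nat_ivl[of g 0 "i*e" e] by (simp add: add.commute)
    then show "sum g {i*e..<i*e+e} = (\<Sum>j<e. g (i*e+j))"
      by (simp add: atLeast0LessThan ac_simps)
  qed
  finally show ?thesis .
qed

lemma sum_div_mod_split2:
  "(\<Sum>k<b*e. f (k div e) (k mod e::nat)) = (\<Sum>i<b. \<Sum>j<e. f i j)"
  unfolding sum_div_mod_split[of "\<lambda>k. f (k div e) (k mod e)" b e]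
  by (rule sum.cong[OF refl], rule sum.cong[OF refl], auto)
lemma mult_entry:
  assumes "i < dim_row A" "j < dim_col B" "dim_col A = dim_row B"
  shows "(A*B) $$ (i,j) = (\<Sum>k<dim_row B. A $$ (i,k) * B $$ (k,j))"
  using assms by (simp add: scalar_prod_def lessThan_atLeast0)

lemma mult_vec_entry:
  assumes "i < dim_row A" "dim_col A = dim_vec v"
  shows "(A *\<^sub>v v) $ i = (\<Sum>k<dim_vec v. A $$ (i,k) * v $ k)"
  using assms by (simp add: scalar_prod_def lessThan_atLeast0)

lemma adj_dims[simp]: "dim_row (adj A) = dim_col A" "dim_col (adj A) = dim_row A"
  by (auto simp: adj_def)

lemma adj_index[simp]: "i < dim_col A \<Longrightarrow> j < dim_row A \<Longrightarrow> adj A $$ (i,j) = cnj (A $$ (j,i))"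
  by (simp add: adj_def)

lemma adj_carrier[simp]: "A \<in> carrier_mat n m \<Longrightarrow> adj A \<in> carrier_mat m n"
  by auto

lemma adj_adj[simp]: "adj (adj A) = A"
  by (rule eq_matI) auto

lemma adj_mult: assumes "dim_col A = dim_row B" shows "adj (A * B) = adj B * adj A"
proof (rule eq_matI)
  fix i j assume "i < dim_row (adj B * adj A)" "j < dim_col (adj B * adj A)"
  then show "adj (A * B) $$ (i, j) = (adj B * adj A) $$ (i, j)"
    using assms apply (simp del: index_mult_mat(1) add: mult_entry)
    by (rule sum.cong, simp, simp add: mult.commute)
qed auto

lemma adj_smult[simp]: "adj (c \<cdot>\<^sub>m A) = cnj c \<cdot>\<^sub>m adj A"
  by (rule eq_matI) auto

lemma adj_one[simp]: "adj (1\<^sub>m n) = 1\<^sub>m n"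
  by (rule eq_matI) auto

lemma adj_add: "dim_row A = dim_row B \<Longrightarrow> dim_col A = dim_col B \<Longrightarrow> adj (A + B) = adj A + adj B"
  by (rule eq_matI) auto

lemma unitary_carrier: "unitary N U \<Longrightarrow> U \<in> carrier_mat N N"
  by (simp add: unitary_def)

lemma unitary_mult:
  assumes "unitary N U" "unitary N W" shows "unitary N (U * W)"
proof -
  have U: "U \<in> carrier_mat N N" and W: "W \<in> carrier_mat N N"
    using assms by (auto simp: unitary_def)
  have aU: "adj U \<in> carrier_mat N N" and aW: "adj W \<in> carrier_mat N N" using U W by auto
  have a: "adj (U*W) = adj W * adj U" using U W by (simp add: adj_mult)
  have "U * W * (adj W * adj U) = U * (W * (adj W * adj U))"
    by (rule assoc_mult_mat[OF U W mult_carrier_mat[OF aW aU]])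
  also have "W * (adj W * adj U) = (W * adj W) * adj U"
    by (rule assoc_mult_mat[OF W aW aU, symmetric])
  also have "W * adj W = 1\<^sub>m N" using assms by (simp add: unitary_def)
  also have "1\<^sub>m N * adj U = adj U" by (rule left_mult_one_mat[OF aU])
  also have "U * adj U = 1\<^sub>m N" using assms by (simp add: unitary_def)
  finally have 1: "U * W * adj (U*W) = 1\<^sub>m N" unfolding a .
  have "adj W * adj U * (U * W) = adj W * (adj U * (U * W))"
    by (rule assoc_mult_mat[OF aW aU mult_carrier_mat[OF U W]])
  also have "adj U * (U * W) = (adj U * U) * W"
    by (rule assoc_mult_mat[OF aU U W, symmetric])
  also have "adj U * U = 1\<^sub>m N" using assms by (simp add: unitary_def)
  also have "1\<^sub>m N * W = W" by (rule left_mult_one_mat[OF W])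
  also have "adj W * W = 1\<^sub>m N" using assms by (simp add: unitary_def)
  finally have 2: "adj (U*W) * (U * W) = 1\<^sub>m N" unfolding a .
  show ?thesis using 1 2 U W by (simp add: unitary_def)
qed

lemma unitary_adj: "unitary N U \<Longrightarrow> unitary N (adj U)"
  by (auto simp: unitary_def)

lemma kron_dims[simp]: "dim_row (kron A B) = dim_row A * dim_row B"
  "dim_col (kron A B) = dim_col A * dim_col B"
  by (auto simp: kron_def)

lemma kron_index:
  "i < dim_row A * dim_row B \<Longrightarrow> j < dim_col A * dim_col B \<Longrightarrow>
   kron A B $$ (i,j) = A $$ (i div dim_row B, j div dim_col B) * B $$ (i mod dim_row B, j mod dim_col B)"
  by (simp add: kron_def)

lemma kron_carrier[simp]: "A \<in> carrier_mat a b \<Longrightarrow> B \<in> carrier_mat c e \<Longrightarrow> kron A B \<in> carrier_mat (a*c) (b*e)"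
  by auto

lemma div_lt: "(i::nat) < a * b \<Longrightarrow> i div b < a"
  by (simp add: less_mult_imp_div_less)
lemma mod_lt: "(i::nat) < a * b \<Longrightarrow> i mod b < b"
  by (metis mod_less_divisor mult_0_right not_less_zero gr0I)

lemma kron_mult:
  assumes A: "A \<in> carrier_mat a b" and B: "B \<in> carrier_mat c e"
    and C: "C \<in> carrier_mat b f" and D: "D \<in> carrier_mat e g"
  shows "kron A B * kron C D = kron (A*C) (B*D)"
proof (rule eq_matI)
  fix i j assume i: "i < dim_row (kron (A*C) (B*D))" and j: "j < dim_col (kron (A*C) (B*D))"
  have i': "i < a*c" and j': "j < f*g" using i j A B C D by auto
  have "(kron A B * kron C D) $$ (i,j) = (\<Sum>k<b*e. kron A B $$ (i,k) * kron C D $$ (k,j))"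
    using i' j' A B C D by (subst mult_entry) auto
  also have "\<dots> = (\<Sum>k1<b. \<Sum>k2<e. kron A B $$ (i,k1*e+k2) * kron C D $$ (k1*e+k2,j))"
    by (rule sum_div_mod_split)
  also have "\<dots> = (\<Sum>k1<b. \<Sum>k2<e. (A $$ (i div c, k1) * C $$ (k1, j div g)) * (B $$ (i mod c, k2) * D $$ (k2, j mod g)))"
  proof (intro sum.cong refl)
    fix k1 k2 assume k1: "k1 \<in> {..<b}" and k2: "k2 \<in> {..<e}"
    have kk: "k1*e+k2 < b*e" using k1 k2
      by (metis lessThan_iff add.commute add_less_cancel_left mult.commute mult_Suc_right
            mult_le_mono2 order_less_le_trans Suc_leI)
    have d1: "(k1*e+k2) div e = k1" and d2: "(k1*e+k2) mod e = k2" using k2 by auto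
    show "kron A B $$ (i,k1*e+k2) * kron C D $$ (k1*e+k2,j) =
      (A $$ (i div c, k1) * C $$ (k1, j div g)) * (B $$ (i mod c, k2) * D $$ (k2, j mod g))"
      using A B C D i' j' kk k2 by (simp add: kron_index d1 d2)
  qed
  also have "\<dots> = (\<Sum>k1<b. A $$ (i div c, k1) * C $$ (k1, j div g)) * (\<Sum>k2<e. B $$ (i mod c, k2) * D $$ (k2, j mod g))"
    by (simp add: sum_product)
  also have "\<dots> = kron (A*C) (B*D) $$ (i,j)"
    using A B C D i' j' by (simp del: index_mult_mat(1) add: kron_index mult_entry div_lt mod_lt)
  finally show "(kron A B * kron C D) $$ (i,j) = kron (A*C) (B*D) $$ (i,j)" .
qed (use A B C D in auto)

lemma adj_kron: "adj (kron A B) = kron (adj A) (adj B)"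
  by (rule eq_matI) (auto simp: kron_index div_lt mod_lt)

lemma kron_smult: "kron (a \<cdot>\<^sub>m A) (b \<cdot>\<^sub>m B) = (a*b) \<cdot>\<^sub>m kron A B"
  by (rule eq_matI) (auto simp: kron_index div_lt mod_lt)

lemma kron_one: "kron (1\<^sub>m a) (1\<^sub>m b) = 1\<^sub>m (a*b)"
proof (rule eq_matI)
  fix i j assume "i < dim_row (1\<^sub>m (a*b))" "j < dim_col (1\<^sub>m (a*b))"
  then have i: "i < a*b" and j: "j < a*b" by auto
  have "(i div b = j div b \<and> i mod b = j mod b) = (i = j)"
    by (metis div_mult_mod_eq)
  then show "kron (1\<^sub>m a) (1\<^sub>m b) $$ (i,j) = 1\<^sub>m (a*b) $$ (i,j)"
    using i j by (auto simp: kron_index div_lt mod_lt)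
qed auto

lemma kron_one_left: "kron (1\<^sub>m 1) A = A"
  by (rule eq_matI) (auto simp: kron_index)

lemma kron_assoc: "kron (kron A B) C = kron A (kron B C)"
proof (rule eq_matI)
  fix i j assume i: "i < dim_row (kron A (kron B C))" and j: "j < dim_col (kron A (kron B C))"
  let ?b = "dim_row B" and ?c = "dim_row C" and ?b' = "dim_col B" and ?c' = "dim_col C"
  have i': "i < dim_row A * (?b * ?c)" and j': "j < dim_col A * (?b' * ?c')" using i j by auto
  have e1: "i div ?c div ?b = i div (?b * ?c)" "i div ?c mod ?b = i mod (?b * ?c) div ?c"
    "i mod ?c = i mod (?b * ?c) mod ?c" by (rule dm1, rule dm2, rule dm3)
  have e2: "j div ?c' div ?b' = j div (?b' * ?c')" "j div ?c' mod ?b' = j mod (?b' * ?c') div ?c'"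
    "j mod ?c' = j mod (?b' * ?c') mod ?c'" by (rule dm1, rule dm2, rule dm3)
  have "i div ?c < dim_row A * ?b" using i' by (simp add: div_lt mult.assoc mult.commute[of ?b])
  moreover have "j div ?c' < dim_col A * ?b'" using j' by (simp add: div_lt mult.assoc mult.commute[of ?b'])
  ultimately show "kron (kron A B) C $$ (i,j) = kron A (kron B C) $$ (i,j)"
    using i' j' apply (simp add: kron_index div_lt mod_lt mult.assoc)
    using e1 e2 by simp
qed (auto simp: mult.assoc)


definition vkron :: "complex vec \<Rightarrow> complex vec \<Rightarrow> complex vec" where
  "vkron u v = vec (dim_vec u * dim_vec v) (\<lambda>i. u $ (i div dim_vec v) * v $ (i mod dim_vec v))"

fun vkron_pow :: "complex vec \<Rightarrow> nat \<Rightarrow> complex vec" where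
  "vkron_pow v 0 = vec 1 (\<lambda>_. 1)"
| "vkron_pow v (Suc n) = vkron v (vkron_pow v n)"

fun kfold :: "('a \<Rightarrow> complex mat) \<Rightarrow> 'a list \<Rightarrow> complex mat" where
  "kfold f [] = 1\<^sub>m 1"
| "kfold f (x # xs) = kron (f x) (kfold f xs)"

lemma vkron_dim[simp]: "dim_vec (vkron u v) = dim_vec u * dim_vec v"
  by (simp add: vkron_def)

lemma vkron_index: "i < dim_vec u * dim_vec v \<Longrightarrow> vkron u v $ i = u $ (i div dim_vec v) * v $ (i mod dim_vec v)"
  by (simp add: vkron_def)

lemma vkron_pow_dim[simp]: "dim_vec (vkron_pow v n) = dim_vec v ^ n"
  by (induction n) auto

lemma kron_pow_carrier: "P \<in> carrier_mat m m \<Longrightarrow> kron_pow P n \<in> carrier_mat (m^n) (m^n)"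
  by (induction n) auto

lemma kfold_carrier: "(\<forall>x\<in>set xs. f x \<in> carrier_mat m m) \<Longrightarrow> kfold f xs \<in> carrier_mat (m ^ length xs) (m ^ length xs)"
  by (induction xs) auto

lemma kron_mult_vec:
  assumes A: "A \<in> carrier_mat a b" and B: "B \<in> carrier_mat c e"
    and u: "u \<in> carrier_vec b" and v: "v \<in> carrier_vec e"
  shows "kron A B *\<^sub>v vkron u v = vkron (A *\<^sub>v u) (B *\<^sub>v v)"
proof (rule eq_vecI)
  fix i assume "i < dim_vec (vkron (A *\<^sub>v u) (B *\<^sub>v v))"
  then have i: "i < a * c" using A B by simp
  have "(kron A B *\<^sub>v vkron u v) $ i = (\<Sum>k<b*e. kron A B $$ (i,k) * vkron u v $ k)"
    using i A B u v by (subst mult_vec_entry) auto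
  also have "\<dots> = (\<Sum>k1<b. \<Sum>k2<e. kron A B $$ (i,k1*e+k2) * vkron u v $ (k1*e+k2))"
    by (rule sum_div_mod_split)
  also have "\<dots> = (\<Sum>k1<b. \<Sum>k2<e. (A $$ (i div c, k1) * u $ k1) * (B $$ (i mod c, k2) * v $ k2))"
  proof (intro sum.cong refl)
    fix k1 k2 assume k1: "k1 \<in> {..<b}" and k2: "k2 \<in> {..<e}"
    have kk: "k1*e+k2 < b*e" using k1 k2
      by (metis lessThan_iff add.commute add_less_cancel_left mult.commute mult_Suc_right
            mult_le_mono2 order_less_le_trans Suc_leI)
    have d1: "(k1*e+k2) div e = k1" and d2: "(k1*e+k2) mod e = k2" using k2 by auto
    show "kron A B $$ (i,k1*e+k2) * vkron u v $ (k1*e+k2) =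
      (A $$ (i div c, k1) * u $ k1) * (B $$ (i mod c, k2) * v $ k2)"
      using A B u v i kk k2 by (simp add: kron_index vkron_index d1 d2)
  qed
  also have "\<dots> = (\<Sum>k1<b. A $$ (i div c, k1) * u $ k1) * (\<Sum>k2<e. B $$ (i mod c, k2) * v $ k2)"
    by (simp add: sum_product)
  also have "\<dots> = vkron (A *\<^sub>v u) (B *\<^sub>v v) $ i"
    using A B u v i by (simp del: index_mult_mat_vec add: vkron_index mult_vec_entry div_lt mod_lt)
  finally show "(kron A B *\<^sub>v vkron u v) $ i = vkron (A *\<^sub>v u) (B *\<^sub>v v) $ i" .
qed (use A B in auto)

lemma proj_vec_dims[simp]: "dim_row (proj_vec v) = dim_vec v" "dim_col (proj_vec v) = dim_vec v"
  by (auto simp: proj_vec_def)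

lemma proj_vec_carrier[simp]: "proj_vec v \<in> carrier_mat (dim_vec v) (dim_vec v)"
  by auto

lemma proj_vec_index: "i < dim_vec v \<Longrightarrow> j < dim_vec v \<Longrightarrow> proj_vec v $$ (i,j) = v $ i * cnj (v $ j)"
  by (simp add: proj_vec_def)

lemma proj_vkron: "proj_vec (vkron u v) = kron (proj_vec u) (proj_vec v)"
  by (rule eq_matI) (auto simp: proj_vec_index kron_index vkron_index div_lt mod_lt)

lemma kron_pow_proj: "kron_pow (proj_vec v) n = proj_vec (vkron_pow v n)"
proof (induction n)
  case 0
  show ?case by (rule eq_matI) (auto simp: proj_vec_index)
next
  case (Suc n)
  then show ?case by (simp add: proj_vkron)
qed

lemma kfold_fix:
  assumes "\<forall>x\<in>set xs. f x \<in> carrier_mat m m \<and> f x *\<^sub>v v = v" and v: "v \<in> carrier_vec m"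
  shows "kfold f xs *\<^sub>v vkron_pow v (length xs) = vkron_pow v (length xs)"
  using assms(1)
proof (induction xs)
  case Nil
  show ?case unfolding kfold.simps list.size vkron_pow.simps by (rule one_mult_mat_vec) simp
next
  case (Cons x xs)
  have fx: "f x \<in> carrier_mat m m" "f x *\<^sub>v v = v" using Cons.prems by auto
  have K: "kfold f xs \<in> carrier_mat (m ^ length xs) (m ^ length xs)"
    by (rule kfold_carrier) (use Cons.prems in auto)
  have vp: "vkron_pow v (length xs) \<in> carrier_vec (m ^ length xs)" 
    by (rule carrier_vecI) (use v in auto)
  show ?case
    using kron_mult_vec[OF fx(1) K v vp] Cons fx by simp
qed

definition lists_n :: "'a set \<Rightarrow> nat \<Rightarrow> 'a list set" where
  "lists_n A n = {xs. set xs \<subseteq> A \<and> length xs = n}"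

lemma lists_n_finite: "finite A \<Longrightarrow> finite (lists_n A n)"
  unfolding lists_n_def by (rule finite_lists_length_eq)

lemma lists_n_card: "finite A \<Longrightarrow> card (lists_n A n) = card A ^ n"
  unfolding lists_n_def by (rule card_lists_length_eq)

lemma sum_lists_n_Suc:
  fixes g :: "'a list \<Rightarrow> 'b::comm_monoid_add"
  shows "(\<Sum>xs\<in>lists_n A (Suc n). g xs) = (\<Sum>x\<in>A. \<Sum>xs\<in>lists_n A n. g (x # xs))"
proof -
  define h :: "'a list \<times> 'a \<Rightarrow> 'a list" where "h = (\<lambda>p. snd p # fst p)"
  have e: "lists_n A (Suc n) = h ` (lists_n A n \<times> A)"
    unfolding lists_n_def h_def using lists_length_Suc_eq[of A n] by (simp add: case_prod_beta)
  have inj: "inj_on h (lists_n A n \<times> A)"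
    by (auto simp: inj_on_def h_def)
  have "(\<Sum>xs\<in>lists_n A (Suc n). g xs) = sum (g \<circ> h) (lists_n A n \<times> A)"
    unfolding e by (rule sum.reindex[OF inj])
  also have "\<dots> = (\<Sum>p\<in>lists_n A n \<times> A. g (snd p # fst p))"
    by (simp add: h_def)
  also have "\<dots> = (\<Sum>xs\<in>lists_n A n. \<Sum>x\<in>A. g (x # xs))"
    by (simp add: sum.cartesian_product case_prod_beta)
  also have "\<dots> = (\<Sum>x\<in>A. \<Sum>xs\<in>lists_n A n. g (x # xs))"
    by (rule sum.swap)
  finally show ?thesis .
qed

lemma lists_n_set: "xs \<in> lists_n A n \<Longrightarrow> set xs \<subseteq> A" "xs \<in> lists_n A n \<Longrightarrow> length xs = n"
  by (auto simp: lists_n_def)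

lemma kfold_sum:
  assumes fin: "finite A" and fA: "\<forall>a\<in>A. f a \<in> carrier_mat m m" and P: "P \<in> carrier_mat m m"
    and S: "\<forall>i<m. \<forall>j<m. (\<Sum>a\<in>A. f a $$ (i,j)) = c * P $$ (i,j)"
  shows "\<forall>i<m^n. \<forall>j<m^n. (\<Sum>xs\<in>lists_n A n. kfold f xs $$ (i,j)) = c^n * kron_pow P n $$ (i,j)"
proof (induction n)
  case 0
  have "lists_n A 0 = {[]}" by (auto simp: lists_n_def)
  then show ?case by simp
next
  case (Suc n)
  show ?case
  proof (intro allI impI)
    fix i j assume i: "i < m ^ Suc n" and j: "j < m ^ Suc n"
    have i': "i < m * m^n" and j': "j < m * m^n" using i j by auto
    have Kxs: "kfold f xs \<in> carrier_mat (m^n) (m^n)" if xs: "xs \<in> lists_n A n" for xs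
    proof -
      have "\<forall>x\<in>set xs. f x \<in> carrier_mat m m" using fA lists_n_set(1)[OF xs] by blast
      from kfold_carrier[OF this] show ?thesis using lists_n_set(2)[OF xs] by simp
    qed
    have "(\<Sum>xs\<in>lists_n A (Suc n). kfold f xs $$ (i,j))
        = (\<Sum>a\<in>A. \<Sum>xs\<in>lists_n A n. kfold f (a # xs) $$ (i,j))"
      by (rule sum_lists_n_Suc)
    also have "\<dots> = (\<Sum>a\<in>A. \<Sum>xs\<in>lists_n A n. f a $$ (i div m^n, j div m^n) * kfold f xs $$ (i mod m^n, j mod m^n))"
    proof (intro sum.cong refl)
      fix a xs assume a: "a \<in> A" and xs: "xs \<in> lists_n A n"
      show "kfold f (a # xs) $$ (i,j) = f a $$ (i div m^n, j div m^n) * kfold f xs $$ (i mod m^n, j mod m^n)"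
        using Kxs[OF xs] fA a i' j' by (subst kfold.simps, subst kron_index) auto
    qed
    also have "\<dots> = (\<Sum>a\<in>A. f a $$ (i div m^n, j div m^n)) * (\<Sum>xs\<in>lists_n A n. kfold f xs $$ (i mod m^n, j mod m^n))"
      by (simp add: sum_product)
    also have "\<dots> = (c * P $$ (i div m^n, j div m^n)) * (c^n * kron_pow P n $$ (i mod m^n, j mod m^n))"
      using S Suc.IH i' j' by (simp add: div_lt mod_lt)
    also have "\<dots> = c ^ Suc n * kron_pow P (Suc n) $$ (i,j)"
      using kron_pow_carrier[OF P, of n] P i' j' by (simp add: kron_index)
    finally show "(\<Sum>xs\<in>lists_n A (Suc n). kfold f xs $$ (i,j)) = c ^ Suc n * kron_pow P (Suc n) $$ (i,j)" .
  qed
qed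


lemma smult_smult_mat: "a \<cdot>\<^sub>m (b \<cdot>\<^sub>m (A::complex mat)) = (a*b) \<cdot>\<^sub>m A"
  by (rule eq_matI) auto

lemma one_smult_mat: "1 \<cdot>\<^sub>m (A::complex mat) = A"
  by (rule eq_matI) auto

lemma X_op_carrier[simp]: "X_op d \<in> carrier_mat d d"
  by (simp add: X_op_def)

lemma Z_op_carrier[simp]: "Z_op d \<in> carrier_mat d d"
  by (simp add: Z_op_def)

lemma pauli_string_carrier: "pauli_string d ps \<in> carrier_mat (d ^ length ps) (d ^ length ps)"
proof (induction ps)
  case Nil then show ?case by simp
next
  case (Cons p ps)
  obtain a b where p: "p = (a,b)" by fastforce
  have "X_op d ^\<^sub>m a * Z_op d ^\<^sub>m b \<in> carrier_mat d d"
    using pow_carrier_mat[OF X_op_carrier] pow_carrier_mat[OF Z_op_carrier] by (rule mult_carrier_mat)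
  then show ?case using Cons p by simp
qed

lemma pauli_string_append: "pauli_string d (xs @ ys) = kron (pauli_string d xs) (pauli_string d ys)"
proof (induction xs)
  case Nil then show ?case using kron_one_left[of "pauli_string d ys"] by simp
next
  case (Cons p xs)
  obtain a b where p: "p = (a,b)" by fastforce
  then show ?case using Cons by (simp add: kron_assoc)
qed

lemma pauli_group_carrier: "P \<in> pauli_group d m \<Longrightarrow> P \<in> carrier_mat (d^m) (d^m)"
  unfolding pauli_group_def using pauli_string_carrier by fastforce

lemma pauli_string_in_group: "length ps = m \<Longrightarrow> pauli_string d ps \<in> pauli_group d m"
  unfolding pauli_group_def using one_smult_mat by (metis (mono_tags, lifting) mem_Collect_eq norm_one)

lemma clifford_carrier: "U \<in> clifford d m \<Longrightarrow> U \<in> carrier_mat (d^m) (d^m)"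
  by (simp add: clifford_def unitary_def)

lemma conj_prod:
  assumes U: "U \<in> carrier_mat N N" and W: "W \<in> carrier_mat N N" and P: "P \<in> carrier_mat N N"
  shows "U * W * P * adj (U * W) = U * (W * P * adj W) * adj U"
proof -
  have aU: "adj U \<in> carrier_mat N N" and aW: "adj W \<in> carrier_mat N N" using U W by auto
  have X: "W * P \<in> carrier_mat N N" using W P by simp
  have XW: "W * P * adj W \<in> carrier_mat N N" using X aW by simp
  have a: "adj (U*W) = adj W * adj U" using U W by (simp add: adj_mult)
  have "U * W * P * adj (U * W) = U * (W * P) * (adj W * adj U)"
    unfolding a assoc_mult_mat[OF U W P] ..
  also have "\<dots> = U * (W * P * (adj W * adj U))"
    by (rule assoc_mult_mat[OF U X mult_carrier_mat[OF aW aU]])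
  also have "W * P * (adj W * adj U) = W * P * adj W * adj U"
    by (rule assoc_mult_mat[OF X aW aU, symmetric])
  also have "U * (W * P * adj W * adj U) = U * (W * P * adj W) * adj U"
    by (rule assoc_mult_mat[OF U XW aU, symmetric])
  finally show ?thesis .
qed

lemma clifford_mult:
  assumes U: "U \<in> clifford d m" and W: "W \<in> clifford d m"
  shows "U * W \<in> clifford d m"
proof -
  have Uc: "U \<in> carrier_mat (d^m) (d^m)" and Wc: "W \<in> carrier_mat (d^m) (d^m)"
    using U W by (auto simp: clifford_carrier)
  have "unitary (d^m) (U*W)" using U W by (intro unitary_mult) (auto simp: clifford_def)
  moreover have "U * W * P * adj (U * W) \<in> pauli_group d m" if P: "P \<in> pauli_group d m" for P
  proof -
    have "W * P * adj W \<in> pauli_group d m" using W P by (auto simp: clifford_def)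
    then have "U * (W * P * adj W) * adj U \<in> pauli_group d m" using U by (auto simp: clifford_def)
    then show ?thesis using conj_prod[OF Uc Wc pauli_group_carrier[OF P]] by simp
  qed
  ultimately show ?thesis by (simp add: clifford_def)
qed

lemma kron_conj:
  assumes A: "A \<in> carrier_mat a a" and B: "B \<in> carrier_mat b b"
    and P: "P \<in> carrier_mat a a" and Q: "Q \<in> carrier_mat b b"
  shows "kron A B * kron P Q * adj (kron A B) = kron (A * P * adj A) (B * Q * adj B)"
proof -
  have "kron A B * kron P Q = kron (A*P) (B*Q)" by (rule kron_mult[OF A B P Q])
  moreover have "kron (A*P) (B*Q) * kron (adj A) (adj B) = kron (A*P*adj A) (B*Q*adj B)"
    by (rule kron_mult) (use A B P Q in auto)
  ultimately show ?thesis by (simp add: adj_kron)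
qed

lemma unitary_kron:
  assumes A: "unitary a A" and B: "unitary b B"
  shows "unitary (a*b) (kron A B)"
proof -
  have Ac: "A \<in> carrier_mat a a" and Bc: "B \<in> carrier_mat b b" using A B by (auto simp: unitary_def)
  have "kron A B * adj (kron A B) = kron (A * adj A) (B * adj B)"
    unfolding adj_kron by (rule kron_mult) (use Ac Bc in auto)
  also have "\<dots> = 1\<^sub>m (a*b)" using A B by (simp add: unitary_def kron_one)
  finally have 1: "kron A B * adj (kron A B) = 1\<^sub>m (a*b)" .
  have "adj (kron A B) * kron A B = kron (adj A * A) (adj B * B)"
    unfolding adj_kron by (rule kron_mult) (use Ac Bc in auto)
  also have "\<dots> = 1\<^sub>m (a*b)" using A B by (simp add: unitary_def kron_one)
  finally have 2: "adj (kron A B) * kron A B = 1\<^sub>m (a*b)" .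
  show ?thesis using 1 2 Ac Bc by (simp add: unitary_def)
qed

lemma clifford_kron:
  assumes A: "A \<in> clifford d m1" and B: "B \<in> clifford d m2"
  shows "kron A B \<in> clifford d (m1 + m2)"
proof -
  have Ac: "A \<in> carrier_mat (d^m1) (d^m1)" and Bc: "B \<in> carrier_mat (d^m2) (d^m2)"
    using A B by (auto simp: clifford_carrier)
  have "unitary (d^m1 * d^m2) (kron A B)"
    using A B by (intro unitary_kron) (auto simp: clifford_def)
  then have U: "unitary (d^(m1+m2)) (kron A B)" by (simp add: power_add)
  moreover have "kron A B * P * adj (kron A B) \<in> pauli_group d (m1+m2)"
    if P: "P \<in> pauli_group d (m1+m2)" for P
  proof -
    obtain c ps where c: "cmod c = 1" and ps: "length ps = m1 + m2" and Pe: "P = c \<cdot>\<^sub>m pauli_string d ps"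
      using P unfolding pauli_group_def by blast
    define P1 where "P1 = pauli_string d (take m1 ps)"
    define P2 where "P2 = pauli_string d (drop m1 ps)"
    have P1c: "P1 \<in> carrier_mat (d^m1) (d^m1)" unfolding P1_def using pauli_string_carrier[of d "take m1 ps"] ps by simp
    have P2c: "P2 \<in> carrier_mat (d^m2) (d^m2)" unfolding P2_def using pauli_string_carrier[of d "drop m1 ps"] ps by simp
    have Pk: "pauli_string d ps = kron P1 P2"
      unfolding P1_def P2_def pauli_string_append[symmetric] by simp
    have "P1 \<in> pauli_group d m1" unfolding P1_def by (rule pauli_string_in_group) (use ps in simp)
    then have "A * P1 * adj A \<in> pauli_group d m1" using A by (auto simp: clifford_def)
    then obtain c1 q1 where c1: "cmod c1 = 1" "length q1 = m1" "A * P1 * adj A = c1 \<cdot>\<^sub>m pauli_string d q1"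
      unfolding pauli_group_def by blast
    have "P2 \<in> pauli_group d m2" unfolding P2_def by (rule pauli_string_in_group) (use ps in simp)
    then have "B * P2 * adj B \<in> pauli_group d m2" using B by (auto simp: clifford_def)
    then obtain c2 q2 where c2: "cmod c2 = 1" "length q2 = m2" "B * P2 * adj B = c2 \<cdot>\<^sub>m pauli_string d q2"
      unfolding pauli_group_def by blast
    have Kc: "kron A B \<in> carrier_mat (d^m1*d^m2) (d^m1*d^m2)" using Ac Bc by simp
    have KPc: "kron P1 P2 \<in> carrier_mat (d^m1*d^m2) (d^m1*d^m2)" using P1c P2c by simp
    have aKc: "adj (kron A B) \<in> carrier_mat (d^m1*d^m2) (d^m1*d^m2)" using Kc by simp
    have "kron A B * P * adj (kron A B) = kron A B * (c \<cdot>\<^sub>m kron P1 P2) * adj (kron A B)"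
      using Pe Pk by simp
    also have "kron A B * (c \<cdot>\<^sub>m kron P1 P2) = c \<cdot>\<^sub>m (kron A B * kron P1 P2)"
      by (rule mult_smult_distrib[OF Kc KPc])
    also have "c \<cdot>\<^sub>m (kron A B * kron P1 P2) * adj (kron A B) = c \<cdot>\<^sub>m (kron A B * kron P1 P2 * adj (kron A B))"
      by (rule mult_smult_assoc_mat[OF mult_carrier_mat[OF Kc KPc] aKc])
    also have "kron A B * kron P1 P2 * adj (kron A B) = kron (A * P1 * adj A) (B * P2 * adj B)"
      by (rule kron_conj[OF Ac Bc P1c P2c])
    also have "\<dots> = (c1*c2) \<cdot>\<^sub>m pauli_string d (q1 @ q2)"
      using c1 c2 by (simp add: kron_smult pauli_string_append)
    also have "c \<cdot>\<^sub>m ((c1*c2) \<cdot>\<^sub>m pauli_string d (q1 @ q2)) = (c*(c1*c2)) \<cdot>\<^sub>m pauli_string d (q1 @ q2)"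
      by (rule smult_smult_mat)
    finally have e: "kron A B * P * adj (kron A B) = (c*(c1*c2)) \<cdot>\<^sub>m pauli_string d (q1 @ q2)" .
    have "cmod (c*(c1*c2)) = 1" using c c1 c2 by (simp add: norm_mult)
    moreover have "length (q1 @ q2) = m1 + m2" using c1 c2 by simp
    ultimately show ?thesis unfolding e pauli_group_def by blast
  qed
  ultimately show ?thesis by (simp add: clifford_def)
qed


definition om :: "nat \<Rightarrow> nat \<Rightarrow> complex" where
  "om d j = exp (complex_of_real (2 * pi) * \<i> * of_nat j / of_nat d)"

lemma X_op_dim[simp]: "dim_row (X_op d) = d" "dim_col (X_op d) = d"
  by (auto simp: X_op_def)

lemma Z_op_om: "Z_op d = mat d d (\<lambda>(i,j). if i = j then om d j else 0)"
  unfolding Z_op_def om_def by (rule refl)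

lemma Z_pow: "Z_op d ^\<^sub>m b = mat d d (\<lambda>(i,j). if i = j then om d j ^ b else 0)"
proof (induction b)
  case 0
  show ?case by (rule eq_matI) (auto simp: Z_op_om)
next
  case (Suc b)
  show ?case
  proof (rule eq_matI)
    fix i j assume i: "i < dim_row (mat d d (\<lambda>(i,j). if i = j then om d j ^ Suc b else 0))"
      and j: "j < dim_col (mat d d (\<lambda>(i,j). if i = j then om d j ^ Suc b else 0))"
    then have i': "i < d" and j': "j < d" by auto
    have "(Z_op d ^\<^sub>m Suc b) $$ (i,j) = (Z_op d ^\<^sub>m b * Z_op d) $$ (i,j)" by simp
    also have "\<dots> = (\<Sum>k<d. (if i = k then om d k ^ b else 0) * (if k = j then om d j else 0))"
      using i' j' unfolding Suc by (subst mult_entry) (auto simp: Z_op_om)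
    also have "\<dots> = (\<Sum>k<d. if k = i then (if i = j then om d j ^ Suc b else 0) else 0)"
      by (rule sum.cong) auto
    also have "\<dots> = (if i = j then om d j ^ Suc b else 0)"
      using i' by simp
    finally show "(Z_op d ^\<^sub>m Suc b) $$ (i,j) = mat d d (\<lambda>(i,j). if i = j then om d j ^ Suc b else 0) $$ (i,j)"
      using i' j' by simp
  qed (auto simp: Z_op_om)
qed

lemma om0[simp]: "om d 0 = 1" by (simp add: om_def)

lemma om_pow_d: assumes "d > 0" shows "om d j ^ d = 1"
proof -
  have "om d j ^ d = exp (of_nat d * (2 * pi * \<i> * of_nat j / of_nat d))"
    unfolding om_def by (rule exp_of_nat_mult[symmetric])
  also have "of_nat d * (2 * pi * \<i> * of_nat j / of_nat d) = of_nat j * (2 * of_real pi * \<i>)"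
    using assms by (simp add: field_simps)
  also have "exp \<dots> = exp (2 * of_real pi * \<i>) ^ j" by (rule exp_of_nat_mult)
  finally show ?thesis by simp
qed

lemma om_ne1: assumes "0 < j" "j < d" shows "om d j \<noteq> 1"
proof
  assume h: "om d j = 1"
  define th where "th = 2 * pi * real j / real d"
  have "om d j = exp (\<i> * complex_of_real th)"
    unfolding om_def th_def by (simp add: field_simps)
  then have "Re (exp (\<i> * complex_of_real th)) = 1" using h by simp
  then have "cos th = 1" by (simp add: Re_exp)
  then obtain k :: int where k: "th = real_of_int k * 2 * pi" using cos_one_2pi_int by blast
  have "real j / real d = th / (2*pi)" using pi_gt_zero by (simp add: th_def)
  also have "\<dots> = real_of_int k" using k pi_gt_zero by (simp add: field_simps)
  finally have "real j / real d = real_of_int k" .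
  moreover have "0 < real j / real d" "real j / real d < 1" using assms by auto
  ultimately have "0 < k" "k < 1" by simp_all
  then show False by simp
qed

lemma Z_sum_om: assumes "j < d" shows "(\<Sum>b<d. om d j ^ b) = (if j = 0 then of_nat d else 0)"
proof (cases "j = 0")
  case True then show ?thesis by simp
next
  case False
  then have "om d j \<noteq> 1" using om_ne1 assms by auto
  then show ?thesis using False om_pow_d[of d j] assms by (simp add: geometric_sum)
qed

lemma XZ0: "X_op d ^\<^sub>m 0 * Z_op d ^\<^sub>m b = Z_op d ^\<^sub>m b"
proof -
  have "X_op d ^\<^sub>m 0 = 1\<^sub>m d" by simp
  then show ?thesis by (simp only:) (rule left_mult_one_mat[OF pow_carrier_mat[OF Z_op_carrier]])
qed

lemma XZ0_carrier: "X_op d ^\<^sub>m 0 * Z_op d ^\<^sub>m b \<in> carrier_mat d d"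
  unfolding XZ0 by (rule pow_carrier_mat) simp

lemma Z_e0: assumes "d > 0" shows "(X_op d ^\<^sub>m 0 * Z_op d ^\<^sub>m b) *\<^sub>v unit_vec d 0 = unit_vec d 0"
proof (rule eq_vecI)
  fix i assume "i < dim_vec (unit_vec d 0)"
  then have i: "i < d" by simp
  have "((X_op d ^\<^sub>m 0 * Z_op d ^\<^sub>m b) *\<^sub>v unit_vec d 0) $ i
       = (\<Sum>k<d. (if i = k then om d k ^ b else 0) * unit_vec d 0 $ k)"
    unfolding XZ0 using i by (subst mult_vec_entry) (auto simp: Z_pow)
  also have "\<dots> = (\<Sum>k<d. if k = i then (if i = 0 then 1 else 0) else 0)"
    by (rule sum.cong) (auto simp: unit_vec_def)
  also have "\<dots> = unit_vec d 0 $ i" using i by (simp add: unit_vec_def)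
  finally show "((X_op d ^\<^sub>m 0 * Z_op d ^\<^sub>m b) *\<^sub>v unit_vec d 0) $ i = unit_vec d 0 $ i" .
qed simp

lemma Z_sum: assumes "d > 0"
  shows "\<forall>i<d. \<forall>j<d. (\<Sum>b\<in>{..<d}. (X_op d ^\<^sub>m 0 * Z_op d ^\<^sub>m b) $$ (i,j)) = of_nat d * proj_vec (unit_vec d 0) $$ (i,j)"
proof (intro allI impI)
  fix i j assume i: "i < d" and j: "j < d"
  show "(\<Sum>b\<in>{..<d}. (X_op d ^\<^sub>m 0 * Z_op d ^\<^sub>m b) $$ (i,j)) = of_nat d * proj_vec (unit_vec d 0) $$ (i,j)"
  proof (cases "i = j")
    case True
    then show ?thesis using i j Z_sum_om[OF j] by (simp add: XZ0 Z_pow proj_vec_index unit_vec_def)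
  next
    case False
    then show ?thesis using i j by (simp add: XZ0 Z_pow proj_vec_index unit_vec_def)
  qed
qed

definition DZ :: "nat \<Rightarrow> nat list \<Rightarrow> complex mat" where
  "DZ d bs = kfold (\<lambda>b. X_op d ^\<^sub>m 0 * Z_op d ^\<^sub>m b) bs"

lemma DZ_pauli: "DZ d bs = pauli_string d (map (\<lambda>b. (0,b)) bs)"
  unfolding DZ_def by (induction bs) auto

lemma vkron_unit0: assumes "a > 0" "b > 0"
  shows "vkron (unit_vec a 0) (unit_vec b 0) = unit_vec (a*b) 0"
proof (rule eq_vecI)
  fix i assume "i < dim_vec (unit_vec (a*b) 0)"
  then have i: "i < a*b" by simp
  have "(i div b = 0 \<and> i mod b = 0) = (i = 0)"
    by (metis div_mult_mod_eq mult_zero_right add_0 div_0 mod_0)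
  then show "vkron (unit_vec a 0) (unit_vec b 0) $ i = unit_vec (a*b) 0 $ i"
    using i assms by (auto simp: vkron_index unit_vec_def div_lt mod_lt)
qed simp

lemma vkron_pow_unit0: assumes "d > 0" shows "vkron_pow (unit_vec d 0) n = unit_vec (d^n) 0"
proof (induction n)
  case 0
  show ?case by (rule eq_vecI) (auto simp: unit_vec_def)
next
  case (Suc n)
  then show ?case using vkron_unit0[of d "d^n"] assms by simp
qed

lemma DZ_carrier: "set bs \<subseteq> {..<d} \<Longrightarrow> DZ d bs \<in> carrier_mat (d ^ length bs) (d ^ length bs)"
  unfolding DZ_def by (rule kfold_carrier) (use XZ0_carrier in blast)

lemma DZ_e0: assumes "d > 0" shows "DZ d bs *\<^sub>v unit_vec (d ^ length bs) 0 = unit_vec (d ^ length bs) 0"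
proof -
  have "kfold (\<lambda>b. X_op d ^\<^sub>m 0 * Z_op d ^\<^sub>m b) bs *\<^sub>v vkron_pow (unit_vec d 0) (length bs) = vkron_pow (unit_vec d 0) (length bs)"
    by (rule kfold_fix) (use assms Z_e0 XZ0_carrier in auto)
  then show ?thesis unfolding DZ_def vkron_pow_unit0[OF assms] .
qed

lemma DZ_sum: assumes "d > 0"
  shows "\<forall>i<d^t. \<forall>j<d^t. (\<Sum>bs\<in>lists_n {..<d} t. DZ d bs $$ (i,j)) = of_nat d ^ t * proj_vec (unit_vec (d^t) 0) $$ (i,j)"
proof -
  have "\<forall>i<d^t. \<forall>j<d^t. (\<Sum>bs\<in>lists_n {..<d} t. kfold (\<lambda>b. X_op d ^\<^sub>m 0 * Z_op d ^\<^sub>m b) bs $$ (i,j)) = of_nat d ^ t * kron_pow (proj_vec (unit_vec d 0)) t $$ (i,j)"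
    by (rule kfold_sum) (use Z_sum[OF assms] XZ0_carrier in auto)
  then show ?thesis unfolding DZ_def kron_pow_proj vkron_pow_unit0[OF assms] .
qed


definition ip :: "complex vec \<Rightarrow> complex vec \<Rightarrow> complex" where
  "ip u v = (\<Sum>i<dim_vec u. cnj (u $ i) * v $ i)"

definition qfm :: "complex mat \<Rightarrow> complex vec \<Rightarrow> complex" where
  "qfm A v = (\<Sum>i<dim_vec v. \<Sum>k<dim_vec v. cnj (v $ i) * A $$ (i,k) * v $ k)"

definition mixm :: "nat \<Rightarrow> 'j set \<Rightarrow> ('j \<Rightarrow> real) \<Rightarrow> ('j \<Rightarrow> complex vec) \<Rightarrow> complex mat" where
  "mixm N J w u = mat N N (\<lambda>(i,l). \<Sum>j\<in>J. of_real (w j) * proj_vec (u j) $$ (i,l))"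

lemma ip_cnj: "dim_vec u = dim_vec v \<Longrightarrow> cnj (ip u v) = ip v u"
  unfolding ip_def by (simp add: mult.commute)

lemma qf_form: assumes "A \<in> carrier_mat N N" "v \<in> carrier_vec N"
  shows "(\<Sum>i<N. cnj (v $ i) * (A *\<^sub>v v) $ i) = qfm A v"
  using assms unfolding qfm_def
  by (auto simp del: index_mult_mat_vec simp: mult_vec_entry sum_distrib_left mult.assoc intro!: sum.cong)

lemma psd_iff: "psd N A \<longleftrightarrow> A \<in> carrier_mat N N \<and> (\<forall>v\<in>carrier_vec N. Im (qfm A v) = 0 \<and> Re (qfm A v) \<ge> 0)"
proof
  assume h: "psd N A"
  then have A: "A \<in> carrier_mat N N" by (simp add: psd_def)
  have H: "\<forall>v\<in>carrier_vec N. Im (\<Sum>i<N. cnj (v $ i) * (A *\<^sub>v v) $ i) = 0 \<and> 0 \<le> Re (\<Sum>i<N. cnj (v $ i) * (A *\<^sub>v v) $ i)"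
    using h unfolding psd_def Let_def by blast
  have "\<forall>v\<in>carrier_vec N. Im (qfm A v) = 0 \<and> Re (qfm A v) \<ge> 0"
  proof
    fix v :: "complex vec" assume v: "v \<in> carrier_vec N"
    from H v have "Im (\<Sum>i<N. cnj (v $ i) * (A *\<^sub>v v) $ i) = 0 \<and> 0 \<le> Re (\<Sum>i<N. cnj (v $ i) * (A *\<^sub>v v) $ i)" by blast
    then show "Im (qfm A v) = 0 \<and> Re (qfm A v) \<ge> 0" by (simp only: qf_form[OF A v])
  qed
  with A show "A \<in> carrier_mat N N \<and> (\<forall>v\<in>carrier_vec N. Im (qfm A v) = 0 \<and> Re (qfm A v) \<ge> 0)" by blast
next
  assume h: "A \<in> carrier_mat N N \<and> (\<forall>v\<in>carrier_vec N. Im (qfm A v) = 0 \<and> Re (qfm A v) \<ge> 0)"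
  then have A: "A \<in> carrier_mat N N" by blast
  have "\<forall>v\<in>carrier_vec N. Im (\<Sum>i<N. cnj (v $ i) * (A *\<^sub>v v) $ i) = 0 \<and> 0 \<le> Re (\<Sum>i<N. cnj (v $ i) * (A *\<^sub>v v) $ i)"
  proof
    fix v :: "complex vec" assume v: "v \<in> carrier_vec N"
    from h v have "Im (qfm A v) = 0 \<and> Re (qfm A v) \<ge> 0" by blast
    then show "Im (\<Sum>i<N. cnj (v $ i) * (A *\<^sub>v v) $ i) = 0 \<and> 0 \<le> Re (\<Sum>i<N. cnj (v $ i) * (A *\<^sub>v v) $ i)"
      by (simp only: qf_form[OF A v])
  qed
  with A show "psd N A" unfolding psd_def Let_def by blast
qed

lemma psdI: assumes A: "A \<in> carrier_mat N N" and h: "\<And>v. v \<in> carrier_vec N \<Longrightarrow> Im (qfm A v) = 0 \<and> Re (qfm A v) \<ge> 0"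
  shows "psd N A"
  using A h by (simp add: psd_iff)

lemma psdD: assumes "psd N A" "v \<in> carrier_vec N"
  shows "Im (qfm A v) = 0" "Re (qfm A v) \<ge> 0"
  using assms by (auto simp: psd_iff)

lemma double_sum_prod: "(\<Sum>i\<in>A. \<Sum>k\<in>B. (c::complex) * (a i * b k)) = c * ((\<Sum>i\<in>A. a i) * (\<Sum>k\<in>B. b k))"
proof -
  have "c * ((\<Sum>i\<in>A. a i) * (\<Sum>k\<in>B. b k)) = c * (\<Sum>i\<in>A. \<Sum>k\<in>B. a i * b k)"
    by (simp only: sum_product)
  also have "\<dots> = (\<Sum>i\<in>A. c * (\<Sum>k\<in>B. a i * b k))" by (rule sum_distrib_left)
  also have "\<dots> = (\<Sum>i\<in>A. \<Sum>k\<in>B. c * (a i * b k))" by (simp only: sum_distrib_left)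
  finally show ?thesis by simp
qed

lemma ip_adj: assumes A: "A \<in> carrier_mat N N" and u: "u \<in> carrier_vec N" and v: "v \<in> carrier_vec N"
  shows "ip (A *\<^sub>v u) v = ip u (adj A *\<^sub>v v)"
proof -
  have "ip (A *\<^sub>v u) v = (\<Sum>i<N. \<Sum>k<N. cnj (A $$ (i,k)) * cnj (u $ k) * v $ i)"
    using assms unfolding ip_def
    by (auto simp del: index_mult_mat_vec simp: mult_vec_entry sum_distrib_right intro!: sum.cong)
  also have "\<dots> = (\<Sum>k<N. \<Sum>i<N. cnj (A $$ (i,k)) * cnj (u $ k) * v $ i)"
    by (rule sum.swap)
  also have "\<dots> = ip u (adj A *\<^sub>v v)"
    using assms unfolding ip_def
    by (auto simp del: index_mult_mat_vec simp: mult_vec_entry sum_distrib_left mult_ac intro!: sum.cong)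
  finally show ?thesis .
qed

lemma mixm_dims[simp]: "dim_row (mixm N J w u) = N" "dim_col (mixm N J w u) = N"
  by (auto simp: mixm_def)

lemma mixm_carrier[simp]: "mixm N J w u \<in> carrier_mat N N"
  by (simp add: mixm_def)

lemma mixm_index: "i < N \<Longrightarrow> l < N \<Longrightarrow> mixm N J w u $$ (i,l) = (\<Sum>j\<in>J. of_real (w j) * proj_vec (u j) $$ (i,l))"
  by (simp add: mixm_def)

lemma mixm_mult_vec:
  assumes u: "\<forall>j\<in>J. u j \<in> carrier_vec N" and v: "v \<in> carrier_vec N"
  shows "mixm N J w u *\<^sub>v v = vec N (\<lambda>i. \<Sum>j\<in>J. of_real (w j) * ip (u j) v * u j $ i)"
proof (rule eq_vecI)
  fix i assume "i < dim_vec (vec N (\<lambda>i. \<Sum>j\<in>J. of_real (w j) * ip (u j) v * u j $ i))"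
  then have i: "i < N" by simp
  have "(mixm N J w u *\<^sub>v v) $ i = (\<Sum>l<N. (\<Sum>j\<in>J. of_real (w j) * proj_vec (u j) $$ (i,l)) * v $ l)"
    using i v by (subst mult_vec_entry) (auto simp: mixm_index intro!: sum.cong)
  also have "\<dots> = (\<Sum>l<N. \<Sum>j\<in>J. of_real (w j) * (u j $ i * cnj (u j $ l)) * v $ l)"
    using i u by (auto simp: sum_distrib_right proj_vec_index intro!: sum.cong)
  also have "\<dots> = (\<Sum>j\<in>J. \<Sum>l<N. of_real (w j) * (u j $ i * cnj (u j $ l)) * v $ l)"
    by (rule sum.swap)
  also have "\<dots> = (\<Sum>j\<in>J. of_real (w j) * ip (u j) v * u j $ i)"
    using u unfolding ip_def by (auto simp: sum_distrib_left sum_distrib_right mult_ac intro!: sum.cong)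
  finally show "(mixm N J w u *\<^sub>v v) $ i = vec N (\<lambda>i. \<Sum>j\<in>J. of_real (w j) * ip (u j) v * u j $ i) $ i"
    using i by simp
qed simp

lemma mixm_qfm:
  assumes u: "\<forall>j\<in>J. u j \<in> carrier_vec N" and v: "v \<in> carrier_vec N"
  shows "qfm (mixm N J w u) v = of_real (\<Sum>j\<in>J. w j * (cmod (ip (u j) v))^2)"
proof -
  have "qfm (mixm N J w u) v = (\<Sum>i<N. \<Sum>k<N. \<Sum>j\<in>J. of_real (w j) * ((cnj (v $ i) * u j $ i) * (cnj (u j $ k) * v $ k)))"
    using u v unfolding qfm_def
    by (auto simp: mixm_index proj_vec_index sum_distrib_left sum_distrib_right mult_ac intro!: sum.cong)
  also have "\<dots> = (\<Sum>j\<in>J. of_real (w j) * ((\<Sum>i<N. cnj (v $ i) * u j $ i) * (\<Sum>k<N. cnj (u j $ k) * v $ k)))"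
  proof -
    have "(\<Sum>i<N. \<Sum>k<N. \<Sum>j\<in>J. of_real (w j) * ((cnj (v $ i) * u j $ i) * (cnj (u j $ k) * v $ k)))
      = (\<Sum>i<N. \<Sum>j\<in>J. \<Sum>k<N. of_real (w j) * ((cnj (v $ i) * u j $ i) * (cnj (u j $ k) * v $ k)))"
      by (rule sum.cong[OF refl], rule sum.swap)
    also have "\<dots> = (\<Sum>j\<in>J. \<Sum>i<N. \<Sum>k<N. of_real (w j) * ((cnj (v $ i) * u j $ i) * (cnj (u j $ k) * v $ k)))"
      by (rule sum.swap)
    also have "\<dots> = (\<Sum>j\<in>J. of_real (w j) * ((\<Sum>i<N. cnj (v $ i) * u j $ i) * (\<Sum>k<N. cnj (u j $ k) * v $ k)))"
      by (rule sum.cong[OF refl], rule double_sum_prod)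
    finally show ?thesis .
  qed
  also have "\<dots> = (\<Sum>j\<in>J. of_real (w j) * (cnj (ip (u j) v) * ip (u j) v))"
    using u v unfolding ip_def by (auto simp: carrier_vecD mult.commute intro!: sum.cong)
  also have "\<dots> = (\<Sum>j\<in>J. of_real (w j * (cmod (ip (u j) v))^2))"
  proof (rule sum.cong[OF refl])
    fix j
    have "of_real ((cmod (ip (u j) v))^2) = ip (u j) v * cnj (ip (u j) v)" by (rule complex_norm_square)
    then show "of_real (w j) * (cnj (ip (u j) v) * ip (u j) v) = of_real (w j * (cmod (ip (u j) v))^2)"
      by (simp only: of_real_mult mult.commute)
  qed
  also have "\<dots> = of_real (\<Sum>j\<in>J. w j * (cmod (ip (u j) v))^2)" by simp
  finally show ?thesis .
qed

lemma mixm_psd: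
  assumes u: "\<forall>j\<in>J. u j \<in> carrier_vec N" and w: "\<forall>j\<in>J. w j \<ge> 0"
  shows "psd N (mixm N J w u)"
proof (rule psdI)
  fix v :: "complex vec" assume v: "v \<in> carrier_vec N"
  have "(\<Sum>j\<in>J. w j * (cmod (ip (u j) v))^2) \<ge> 0" using w by (intro sum_nonneg) auto
  then show "Im (qfm (mixm N J w u) v) = 0 \<and> Re (qfm (mixm N J w u) v) \<ge> 0"
    using mixm_qfm[OF u v] by simp
qed simp

lemma mixm_tr:
  assumes u: "\<forall>j\<in>J. u j \<in> carrier_vec N \<and> ip (u j) (u j) = 1"
  shows "tr (mixm N J w u) = of_real (\<Sum>j\<in>J. w j)"
proof -
  have "tr (mixm N J w u) = (\<Sum>i<N. \<Sum>j\<in>J. of_real (w j) * (u j $ i * cnj (u j $ i)))"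
    unfolding tr_def using u by (auto simp: mixm_index proj_vec_index carrier_vecD intro!: sum.cong)
  also have "\<dots> = (\<Sum>j\<in>J. of_real (w j) * (\<Sum>i<N. cnj (u j $ i) * u j $ i))"
    by (simp add: sum.swap[of _ J] sum_distrib_left mult_ac)
  also have "\<dots> = (\<Sum>j\<in>J. of_real (w j))"
    using u unfolding ip_def by (auto intro!: sum.cong)
  finally show ?thesis by simp
qed


lemma delta_l: "j < (N::nat) \<Longrightarrow> (\<Sum>k<N. (if k = j then 1 else 0) * (f k :: complex)) = f j"
proof -
  assume j: "j < N"
  have "(\<Sum>k<N. (if k = j then 1 else 0) * f k) = (\<Sum>k<N. if k = j then f k else 0)"
    by (rule sum.cong) auto
  also have "\<dots> = f j" using j by (subst sum.delta) auto
  finally show ?thesis .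
qed
lemma delta_r: "j < (N::nat) \<Longrightarrow> (\<Sum>k<N. (f k :: complex) * (if k = j then 1 else 0)) = f j"
  using delta_l[of j N f] by (simp add: mult.commute)
lemma mult_unit_vec_entry: fixes A :: "complex mat" assumes "A \<in> carrier_mat N N" "i < N" "j < N"
  shows "(A *\<^sub>v unit_vec N j) $ i = A $$ (i,j)"
  using assms delta_r[of j N "\<lambda>k. A $$ (i,k)"] by (subst mult_vec_entry) (auto simp: unit_vec_def)

lemma mat_eq_action: fixes A B :: "complex mat" assumes A: "A \<in> carrier_mat N N" and B: "B \<in> carrier_mat N N"
  and h: "\<And>x. x \<in> carrier_vec N \<Longrightarrow> A *\<^sub>v x = B *\<^sub>v x"
  shows "A = B"
proof (rule eq_matI)
  fix i j assume i: "i < dim_row B" and j: "j < dim_col B"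
  then have i': "i < N" and j': "j < N" using B by auto
  have "A $$ (i,j) = (A *\<^sub>v unit_vec N j) $ i" using mult_unit_vec_entry[OF A i' j'] by simp
  also have "\<dots> = (B *\<^sub>v unit_vec N j) $ i" using h[of "unit_vec N j"] by simp
  also have "\<dots> = B $$ (i,j)" using mult_unit_vec_entry[OF B i' j'] by simp
  finally show "A $$ (i,j) = B $$ (i,j)" .
qed (use A B in auto)

lemma ip_unit: "ip (unit_vec N 0) (unit_vec N 0) = 1" if "N > 0"
proof -
  have "ip (unit_vec N 0) (unit_vec N 0) = (\<Sum>k<N. (if k = 0 then 1 else 0) * (if k = 0 then 1 else 0))"
    unfolding ip_def by (auto intro!: sum.cong)
  then show ?thesis using that delta_r[of 0 N "\<lambda>k. if k = 0 then 1 else 0"] by simp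
qed

lemma proj_idem: assumes "Psi \<in> carrier_vec N" "ip Psi Psi = 1"
  shows "proj_vec Psi * proj_vec Psi = proj_vec Psi"
proof (rule eq_matI)
  fix i j assume "i < dim_row (proj_vec Psi)" "j < dim_col (proj_vec Psi)"
  then have i: "i < N" and j: "j < N" using assms by auto
  have "(proj_vec Psi * proj_vec Psi) $$ (i,j) = (\<Sum>k<N. Psi $ i * cnj (Psi $ k) * (Psi $ k * cnj (Psi $ j)))"
    using i j assms by (subst mult_entry) (auto simp: proj_vec_index)
  also have "\<dots> = Psi $ i * cnj (Psi $ j) * (\<Sum>k<N. cnj (Psi $ k) * Psi $ k)"
    by (simp add: sum_distrib_left mult_ac)
  also have "\<dots> = Psi $ i * cnj (Psi $ j) * ip Psi Psi"
    using assms unfolding ip_def by simp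
  finally show "(proj_vec Psi * proj_vec Psi) $$ (i,j) = proj_vec Psi $$ (i,j)"
    using assms i j by (simp add: proj_vec_index)
qed auto

lemma adj_proj: "adj (proj_vec Psi) = proj_vec Psi"
  by (rule eq_matI) (auto simp: proj_vec_index)

lemma range_proj_mult:
  fixes P Q :: "complex mat"
  assumes P: "P \<in> carrier_mat N N" and Q: "Q \<in> carrier_mat N N" and PP: "P * P = P"
    and R: "{Q *\<^sub>v x | x. x \<in> carrier_vec N} \<subseteq> {P *\<^sub>v x | x. x \<in> carrier_vec N}"
  shows "P * Q = Q"
proof (rule mat_eq_action[OF mult_carrier_mat[OF P Q] Q])
  fix x :: "complex vec" assume x: "x \<in> carrier_vec N"
  have "Q *\<^sub>v x \<in> {P *\<^sub>v x | x. x \<in> carrier_vec N}" using R x by blast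
  then obtain y where y: "y \<in> carrier_vec N" "Q *\<^sub>v x = P *\<^sub>v y" by blast
  have "(P * Q) *\<^sub>v x = P *\<^sub>v (Q *\<^sub>v x)" using P Q x by simp
  also have "\<dots> = (P * P) *\<^sub>v y" using P y by simp
  also have "\<dots> = Q *\<^sub>v x" using PP y by simp
  finally show "(P * Q) *\<^sub>v x = Q *\<^sub>v x" .
qed

lemma supp_proj_proj:
  assumes Psi: "Psi \<in> carrier_vec N" "ip Psi Psi = 1"
  shows "supp_proj N (proj_vec Psi) = proj_vec Psi"
proof -
  let ?r = "proj_vec Psi"
  have rc: "?r \<in> carrier_mat N N" using Psi by auto
  have rr: "?r * ?r = ?r" by (rule proj_idem[OF Psi])
  have ex: "?r \<in> carrier_mat N N \<and> adj ?r = ?r \<and> ?r * ?r = ?r \<and>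
      {?r *\<^sub>v x | x. x \<in> carrier_vec N} = {?r *\<^sub>v x | x. x \<in> carrier_vec N}"
    using rc rr adj_proj by simp
  have uniq: "P = ?r" if h: "P \<in> carrier_mat N N \<and> adj P = P \<and> P * P = P \<and>
      {P *\<^sub>v x | x. x \<in> carrier_vec N} = {?r *\<^sub>v x | x. x \<in> carrier_vec N}" for P
  proof -
    have P: "P \<in> carrier_mat N N" and aP: "adj P = P" and PP: "P * P = P" using h by auto
    have 1: "P * ?r = ?r" by (rule range_proj_mult[OF P rc PP]) (use h in blast)
    have 2: "?r * P = P" by (rule range_proj_mult[OF rc P rr]) (use h in blast)
    have "P = adj (?r * P)" using 2 aP by simp
    also have "\<dots> = adj P * adj ?r" by (rule adj_mult) (use P rc in auto)
    also have "\<dots> = ?r" using aP adj_proj 1 by simp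
    finally show ?thesis .
  qed
  show ?thesis unfolding supp_proj_def
    apply (rule the_equality)
     apply (rule ex)
    apply (erule uniq)
    done
qed

lemma tr_proj_mult: assumes Psi: "Psi \<in> carrier_vec N" and S: "S \<in> carrier_mat N N"
  shows "tr (proj_vec Psi * S) = qfm S Psi"
proof -
  have e: "(proj_vec Psi * S) $$ (i,i) = (\<Sum>k<N. Psi $ i * cnj (Psi $ k) * S $$ (k,i))" if i: "i < N" for i
    by (subst mult_entry) (use Psi S i in \<open>auto simp: proj_vec_index\<close>)
  have "tr (proj_vec Psi * S) = (\<Sum>i<N. \<Sum>k<N. Psi $ i * cnj (Psi $ k) * S $$ (k,i))"
    unfolding tr_def using Psi e by (auto intro!: sum.cong)
  also have "\<dots> = (\<Sum>k<N. \<Sum>i<N. Psi $ i * cnj (Psi $ k) * S $$ (k,i))" by (rule sum.swap)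
  also have "\<dots> = qfm S Psi" unfolding qfm_def using Psi by (auto simp: mult_ac intro!: sum.cong)
  finally show ?thesis .
qed

lemma proj_mixm: assumes "Psi \<in> carrier_vec N"
  shows "proj_vec Psi = mixm N {0::nat} (\<lambda>_. 1) (\<lambda>_. Psi)"
  using assms by (intro eq_matI) (auto simp: mixm_index)

lemma qfm_proj: assumes "Psi \<in> carrier_vec N" "v \<in> carrier_vec N"
  shows "qfm (proj_vec Psi) v = of_real ((cmod (ip Psi v))^2)"
  using mixm_qfm[of "{0::nat}" "\<lambda>_. Psi" N v "\<lambda>_. 1"] assms by (simp add: proj_mixm[OF assms(1)])

lemma tr_proj: assumes "Psi \<in> carrier_vec N" "ip Psi Psi = 1"
  shows "tr (proj_vec Psi) = 1"
  using mixm_tr[of "{0::nat}" "\<lambda>_. Psi" N "\<lambda>_. 1"] assms by (simp add: proj_mixm[OF assms(1)])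

lemma qfm_lin: assumes "v \<in> carrier_vec N"
  shows "qfm (mat N N (\<lambda>(i,l). a * A $$ (i,l) + b * B $$ (i,l))) v = a * qfm A v + b * qfm B v"
  using assms unfolding qfm_def
  by (auto simp: algebra_simps sum.distrib sum_distrib_left intro!: sum.cong)

lemma qfm_unit: assumes "A \<in> carrier_mat N N" "i < N" shows "qfm A (unit_vec N i) = A $$ (i,i)"
proof -
  have "qfm A (unit_vec N i) = (\<Sum>a<N. (if a = i then 1 else 0) * (\<Sum>b<N. A $$ (a,b) * (if b = i then 1 else 0)))"
    unfolding qfm_def using assms by (auto simp: sum_distrib_left intro!: sum.cong)
  also have "\<dots> = A $$ (i,i)" using assms by (simp add: delta_l delta_r)
  finally show ?thesis .
qed
lemma ip_unit_right: assumes "Psi \<in> carrier_vec N" "i < N" shows "ip Psi (unit_vec N i) = cnj (Psi $ i)"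
proof -
  have "ip Psi (unit_vec N i) = (\<Sum>k<N. cnj (Psi $ k) * (if k = i then 1 else 0))"
    unfolding ip_def using assms by (auto intro!: sum.cong)
  then show ?thesis using assms delta_r by simp
qed


lemma stab_vec_props: assumes d: "d > 0" and u: "u \<in> stab_vecs d m"
  shows "u \<in> carrier_vec (d^m)" "ip u u = 1"
proof -
  obtain C where C: "C \<in> clifford d m" and ue: "u = C *\<^sub>v unit_vec (d^m) 0"
    using u unfolding stab_vecs_def by blast
  have Cc: "C \<in> carrier_mat (d^m) (d^m)" using C by (rule clifford_carrier)
  have U: "unitary (d^m) C" using C by (simp add: clifford_def)
  have e: "(unit_vec (d^m) 0 :: complex vec) \<in> carrier_vec (d^m)" by simp
  show uc: "u \<in> carrier_vec (d^m)" using ue Cc by simp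
  have "ip u u = ip (unit_vec (d^m) 0) (adj C *\<^sub>v (C *\<^sub>v unit_vec (d^m) 0))"
    unfolding ue by (rule ip_adj[OF Cc e]) (use Cc in simp)
  also have "adj C *\<^sub>v (C *\<^sub>v unit_vec (d^m) 0) = (adj C * C) *\<^sub>v unit_vec (d^m) 0"
    using assoc_mult_mat_vec[OF adj_carrier[OF Cc] Cc e] by simp
  also have "adj C * C = 1\<^sub>m (d^m)" using U by (simp add: unitary_def)
  also have "1\<^sub>m (d^m) *\<^sub>v unit_vec (d^m) 0 = (unit_vec (d^m) 0 :: complex vec)" by (rule one_mult_mat_vec[OF e])
  also have "ip (unit_vec (d^m) 0) (unit_vec (d^m) 0) = 1" using d by (intro ip_unit) simp
  finally show "ip u u = 1" .
qed

lemma stab_vec_clifford: assumes g: "g \<in> clifford d m" and u: "u \<in> stab_vecs d m"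
  shows "g *\<^sub>v u \<in> stab_vecs d m"
proof -
  obtain C where C: "C \<in> clifford d m" and ue: "u = C *\<^sub>v unit_vec (d^m) 0"
    using u unfolding stab_vecs_def by blast
  have "g *\<^sub>v u = (g * C) *\<^sub>v unit_vec (d^m) 0"
    using ue clifford_carrier[OF g] clifford_carrier[OF C] by simp
  moreover have "g * C \<in> clifford d m" by (rule clifford_mult[OF g C])
  ultimately show ?thesis unfolding stab_vecs_def by blast
qed

lemma F_STAB_mixm:
  assumes J: "finite J" and wu: "\<forall>j\<in>J. w j \<ge> 0 \<and> u j \<in> stab_vecs d m" and s: "sum w J = 1"
  shows "mixm (d^m) J w u \<in> F_STAB d m"
proof -
  obtain f where f: "bij_betw f {0..<card J} J" using ex_bij_betw_nat_finite[OF J] by blast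
  have f': "bij_betw f {..<card J} J" using f by (simp add: atLeast0LessThan)
  have s': "(\<Sum>k<card J. w (f k)) = 1" using sum.reindex_bij_betw[OF f', of w] s by simp
  have gen: "(\<Sum>j\<in>J. h j) = (\<Sum>k<card J. h (f k))" for h :: "_ \<Rightarrow> complex"
    by (rule sum.reindex_bij_betw[OF f', symmetric])
  have "mixm (d^m) J w u = mat (d^m) (d^m) (\<lambda>(i,j). \<Sum>k<card J. of_real (w (f k)) * proj_vec (u (f k)) $$ (i,j))"
    unfolding mixm_def gen ..
  moreover have "\<forall>k<card J. w (f k) \<ge> 0 \<and> u (f k) \<in> stab_vecs d m"
    using wu f' by (auto simp: bij_betw_def)
  ultimately show ?thesis unfolding F_STAB_def mem_Collect_eq using s'
    by (intro exI[of _ "card J"] exI[of _ "\<lambda>k. w (f k)"] exI[of _ "\<lambda>k. u (f k)"]) auto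
qed

lemma F_STAB_cases: assumes "\<sigma> \<in> F_STAB d m"
  shows "\<exists>K (p::nat \<Rightarrow> real) vs. (\<forall>k<K. p k \<ge> 0 \<and> vs k \<in> stab_vecs d m) \<and> (\<Sum>k<K. p k) = 1 \<and> \<sigma> = mixm (d^m) {..<K} p vs"
proof -
  obtain K and p :: "nat \<Rightarrow> real" and vs where h: "(\<forall>k<K. p k \<ge> 0 \<and> vs k \<in> stab_vecs d m)" "(\<Sum>k<K. p k) = 1"
    "\<sigma> = mat (d ^ m) (d ^ m) (\<lambda>(i,j). \<Sum>k<K. of_real (p k) * proj_vec (vs k) $$ (i,j))"
    using assms unfolding F_STAB_def by blast
  have "\<sigma> = mixm (d^m) {..<K} p vs" unfolding mixm_def h(3) ..
  with h show ?thesis by blast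
qed

lemma adj_fix: assumes U: "unitary N g" and P: "Psi \<in> carrier_vec N" and f: "g *\<^sub>v Psi = Psi"
  shows "adj g *\<^sub>v Psi = Psi"
proof -
  have gc: "g \<in> carrier_mat N N" using U by (simp add: unitary_def)
  have "adj g *\<^sub>v Psi = adj g *\<^sub>v (g *\<^sub>v Psi)" using f by simp
  also have "\<dots> = (adj g * g) *\<^sub>v Psi" using assoc_mult_mat_vec[OF adj_carrier[OF gc] gc P] by simp
  also have "adj g * g = 1\<^sub>m N" using U by (simp add: unitary_def)
  finally show ?thesis using P by simp
qed

lemma adj_mixm: assumes "\<forall>j\<in>J. u j \<in> carrier_vec N"
  shows "adj (mixm N J w u) = mixm N J w u"
proof (rule eq_matI)
  fix i l assume "i < dim_row (mixm N J w u)" "l < dim_col (mixm N J w u)"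
  then have i: "i < N" and l: "l < N" by auto
  have pt: "cnj (of_real (w j) * proj_vec (u j) $$ (l,i)) = of_real (w j) * proj_vec (u j) $$ (i,l)" if j: "j \<in> J" for j
  proof -
    have "dim_vec (u j) = N" using assms j by auto
    then show ?thesis using i l by (simp add: proj_vec_index mult.commute)
  qed
  have "adj (mixm N J w u) $$ (i,l) = cnj (mixm N J w u $$ (l,i))" using i l by simp
  also have "\<dots> = (\<Sum>j\<in>J. cnj (of_real (w j) * proj_vec (u j) $$ (l,i)))"
    using i l by (simp add: mixm_index cnj_sum del: complex_cnj_mult)
  also have "\<dots> = (\<Sum>j\<in>J. of_real (w j) * proj_vec (u j) $$ (i,l))"
    by (rule sum.cong[OF refl]) (rule pt)
  also have "\<dots> = mixm N J w u $$ (i,l)" using i l by (simp add: mixm_index)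
  finally show "adj (mixm N J w u) $$ (i,l) = mixm N J w u $$ (i,l)" .
qed auto

lemma ip_herm: assumes A: "A \<in> carrier_mat N N" and aA: "adj A = A"
  and x: "x \<in> carrier_vec N" and y: "y \<in> carrier_vec N"
  shows "ip x (A *\<^sub>v y) = ip (A *\<^sub>v x) y"
  using ip_adj[OF A x y] aA by simp

lemma ip_qfm: assumes "A \<in> carrier_mat N N" "v \<in> carrier_vec N"
  shows "ip v (A *\<^sub>v v) = qfm A v"
  using qf_form[OF assms] assms unfolding ip_def by simp

lemma tr_lin: assumes "A \<in> carrier_mat N N" "B \<in> carrier_mat N N"
  shows "tr (mat N N (\<lambda>(i,l). a * A $$ (i,l) + b * B $$ (i,l))) = a * tr A + b * tr B"
  using assms unfolding tr_def by (simp add: sum.distrib sum_distrib_left)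

lemma ip_self_real: assumes "Psi \<in> carrier_vec N"
  shows "ip Psi Psi = of_real (\<Sum>i<N. (cmod (Psi $ i))^2)"
proof -
  have "ip Psi Psi = (\<Sum>i<N. of_real ((cmod (Psi $ i))^2))"
  proof -
    have "cnj (Psi $ i) * Psi $ i = of_real ((cmod (Psi $ i))^2)" for i
      by (simp only: complex_norm_square mult.commute)
    then show ?thesis unfolding ip_def using assms by simp
  qed
  then show ?thesis by simp
qed


lemma twirl_fix:
  fixes g :: "'a \<Rightarrow> complex mat" and vs :: "nat \<Rightarrow> complex vec" and p :: "nat \<Rightarrow> real"
  assumes I: "finite I" "card I > 0"
    and gc: "\<forall>x\<in>I. g x \<in> carrier_mat N N" and gadj: "\<forall>x\<in>I. adj (g x) *\<^sub>v Psi = Psi"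
    and gsum: "\<forall>i<N. \<forall>j<N. (\<Sum>x\<in>I. g x $$ (i,j)) = of_nat (card I) * proj_vec Psi $$ (i,j)"
    and Psi: "Psi \<in> carrier_vec N" and vs: "\<forall>k<K. vs k \<in> carrier_vec N"
  shows "mixm N (I \<times> {..<K}) (\<lambda>(x,k). p k / real (card I)) (\<lambda>(x,k). g x *\<^sub>v vs k) *\<^sub>v Psi
       = vec N (\<lambda>i. of_real (\<Sum>k<K. p k * (cmod (ip (vs k) Psi))^2) * Psi $ i)"
proof -
  let ?M = "real (card I)"
  let ?w = "\<lambda>(x,k). p k / ?M" and ?u = "\<lambda>(x,k). g x *\<^sub>v vs k"
  have uc: "\<forall>j\<in>I \<times> {..<K}. ?u j \<in> carrier_vec N" using gc vs by auto
  define Y where "Y = (\<lambda>l. \<Sum>k<K. of_real (p k) * ip (vs k) Psi * vs k $ l)"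
  have step: "(\<Sum>j\<in>I \<times> {..<K}. of_real (?w j) * ip (?u j) Psi * ?u j $ i) = of_real (\<Sum>k<K. p k * (cmod (ip (vs k) Psi))^2) * Psi $ i"
    if i: "i < N" for i
  proof -
    have "(\<Sum>j\<in>I \<times> {..<K}. of_real (?w j) * ip (?u j) Psi * ?u j $ i)
        = (\<Sum>x\<in>I. \<Sum>k<K. of_real (p k / ?M) * ip (g x *\<^sub>v vs k) Psi * (g x *\<^sub>v vs k) $ i)"
      by (simp add: sum.cartesian_product split_beta)
    also have "\<dots> = (\<Sum>x\<in>I. \<Sum>k<K. \<Sum>l<N. of_real (1 / ?M) * (g x $$ (i,l) * (of_real (p k) * ip (vs k) Psi * vs k $ l)))"
    proof (intro sum.cong refl)
      fix x k assume x: "x \<in> I" and k: "k \<in> {..<K}"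
      have g: "g x \<in> carrier_mat N N" using gc x by auto
      have v: "vs k \<in> carrier_vec N" using vs k by auto
      have "ip (g x *\<^sub>v vs k) Psi = ip (vs k) Psi"
        using ip_adj[OF g v Psi] gadj x by simp
      moreover have "(g x *\<^sub>v vs k) $ i = (\<Sum>l<N. g x $$ (i,l) * vs k $ l)"
        using g v i by (subst mult_vec_entry) auto
      ultimately show "of_real (p k / ?M) * ip (g x *\<^sub>v vs k) Psi * (g x *\<^sub>v vs k) $ i
          = (\<Sum>l<N. of_real (1 / ?M) * (g x $$ (i,l) * (of_real (p k) * ip (vs k) Psi * vs k $ l)))"
        by (simp add: sum_distrib_left mult_ac)
    qed
    also have "\<dots> = (\<Sum>x\<in>I. \<Sum>l<N. \<Sum>k<K. of_real (1 / ?M) * (g x $$ (i,l) * (of_real (p k) * ip (vs k) Psi * vs k $ l)))"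
      by (rule sum.cong[OF refl], rule sum.swap)
    also have "\<dots> = (\<Sum>l<N. \<Sum>x\<in>I. \<Sum>k<K. of_real (1 / ?M) * (g x $$ (i,l) * (of_real (p k) * ip (vs k) Psi * vs k $ l)))"
      by (rule sum.swap)
    also have "\<dots> = (\<Sum>l<N. of_real (1 / ?M) * ((\<Sum>x\<in>I. g x $$ (i,l)) * Y l))"
      unfolding Y_def by (rule sum.cong[OF refl], rule double_sum_prod)
    also have "\<dots> = (\<Sum>l<N. Psi $ i * (cnj (Psi $ l) * Y l))"
    proof (rule sum.cong[OF refl])
      fix l assume l: "l \<in> {..<N}"
      have "(\<Sum>x\<in>I. g x $$ (i,l)) = of_nat (card I) * (Psi $ i * cnj (Psi $ l))"
        using gsum i l Psi by (simp add: proj_vec_index)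
      then show "of_real (1 / ?M) * ((\<Sum>x\<in>I. g x $$ (i,l)) * Y l) = Psi $ i * (cnj (Psi $ l) * Y l)"
        using I by (simp add: field_simps card_gt_0_iff)
    qed
    also have "\<dots> = Psi $ i * (\<Sum>l<N. cnj (Psi $ l) * Y l)" by (simp add: sum_distrib_left)
    also have "(\<Sum>l<N. cnj (Psi $ l) * Y l) = (\<Sum>k<K. of_real (p k) * ip (vs k) Psi * ip Psi (vs k))"
    proof -
      have "(\<Sum>l<N. cnj (Psi $ l) * Y l) = (\<Sum>l<N. \<Sum>k<K. of_real (p k) * ip (vs k) Psi * (cnj (Psi $ l) * vs k $ l))"
        unfolding Y_def by (simp add: sum_distrib_left mult_ac)
      also have "\<dots> = (\<Sum>k<K. \<Sum>l<N. of_real (p k) * ip (vs k) Psi * (cnj (Psi $ l) * vs k $ l))"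
        by (rule sum.swap)
      also have "\<dots> = (\<Sum>k<K. of_real (p k) * ip (vs k) Psi * ip Psi (vs k))"
        using Psi unfolding ip_def by (simp add: sum_distrib_left)
      finally show ?thesis .
    qed
    also have "(\<Sum>k<K. of_real (p k) * ip (vs k) Psi * ip Psi (vs k)) = of_real (\<Sum>k<K. p k * (cmod (ip (vs k) Psi))^2)"
    proof -
      have pk: "of_real (p k) * ip (vs k) Psi * ip Psi (vs k) = of_real (p k * (cmod (ip (vs k) Psi))^2)" if k: "k < K" for k
      proof -
        have "ip Psi (vs k) = cnj (ip (vs k) Psi)" using ip_cnj[of "vs k" Psi] vs k Psi by simp
        moreover have "of_real ((cmod (ip (vs k) Psi))^2) = ip (vs k) Psi * cnj (ip (vs k) Psi)"
          by (rule complex_norm_square)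
        ultimately show ?thesis by (simp only: of_real_mult mult.assoc)
      qed
      have "(\<Sum>k<K. of_real (p k) * ip (vs k) Psi * ip Psi (vs k)) = (\<Sum>k<K. of_real (p k * (cmod (ip (vs k) Psi))^2))"
      proof (rule sum.cong[OF refl])
        fix k assume "k \<in> {..<K}"
        then show "of_real (p k) * ip (vs k) Psi * ip Psi (vs k) = of_real (p k * (cmod (ip (vs k) Psi))^2)"
          by (intro pk) simp
      qed
      then show ?thesis by (simp only: of_real_sum)
    qed
    finally show ?thesis by (simp add: mult.commute)
  qed
  show ?thesis
    unfolding mixm_mult_vec[OF uc Psi] by (rule eq_vecI) (auto simp: step)
qed

lemma mix_lower:
  fixes u :: "'j \<Rightarrow> complex vec"
  assumes u: "\<forall>j\<in>J. u j \<in> carrier_vec N" and w: "\<forall>j\<in>J. w j \<ge> 0"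
    and Psi: "Psi \<in> carrier_vec N" and nPsi: "ip Psi Psi = 1"
    and hfix: "mixm N J w u *\<^sub>v Psi = vec N (\<lambda>i. of_real fv * Psi $ i)"
    and v: "v \<in> carrier_vec N"
  shows "(\<Sum>j\<in>J. w j * (cmod (ip (u j) v))^2) \<ge> fv * (cmod (ip Psi v))^2"
proof -
  let ?S = "mixm N J w u"
  define a where "a = ip Psi v"
  define r where "r = vec N (\<lambda>i. v $ i - a * Psi $ i)"
  have Sc: "?S \<in> carrier_mat N N" by simp
  have rc: "r \<in> carrier_vec N" unfolding r_def by simp
  have dims: "dim_vec v = N" "dim_vec Psi = N" using v Psi by auto
  have Sr: "?S *\<^sub>v r = vec N (\<lambda>i. (?S *\<^sub>v v) $ i - a * of_real fv * Psi $ i)"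
  proof (rule eq_vecI)
    fix i assume "i < dim_vec (vec N (\<lambda>i. (?S *\<^sub>v v) $ i - a * of_real fv * Psi $ i))"
    then have i: "i < N" by simp
    have "(?S *\<^sub>v r) $ i = (\<Sum>k<N. ?S $$ (i,k) * (v $ k - a * Psi $ k))"
      using i rc unfolding r_def by (subst mult_vec_entry) auto
    also have "\<dots> = (\<Sum>k<N. ?S $$ (i,k) * v $ k) - a * (\<Sum>k<N. ?S $$ (i,k) * Psi $ k)"
      by (simp add: algebra_simps sum_subtractf sum_distrib_left)
    also have "(\<Sum>k<N. ?S $$ (i,k) * v $ k) = (?S *\<^sub>v v) $ i"
      using i dims by (subst mult_vec_entry) auto
    also have "(\<Sum>k<N. ?S $$ (i,k) * Psi $ k) = (?S *\<^sub>v Psi) $ i"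
      using i dims by (subst mult_vec_entry) auto
    also have "(?S *\<^sub>v Psi) $ i = of_real fv * Psi $ i" using hfix i by simp
    finally show "(?S *\<^sub>v r) $ i = vec N (\<lambda>i. (?S *\<^sub>v v) $ i - a * of_real fv * Psi $ i) $ i"
      using i by (simp add: mult_ac)
  qed (simp)
  have herm: "ip Psi (?S *\<^sub>v v) = of_real fv * a"
  proof -
    have "ip Psi (?S *\<^sub>v v) = ip (?S *\<^sub>v Psi) v"
      by (rule ip_herm[OF Sc adj_mixm[OF u] Psi v])
    also have "\<dots> = (\<Sum>i<N. cnj (of_real fv * Psi $ i) * v $ i)"
      unfolding hfix ip_def by simp
    also have "\<dots> = of_real fv * a" unfolding a_def ip_def using dims by (simp add: sum_distrib_left mult_ac)
    finally show ?thesis .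
  qed
  have ipvP: "ip v Psi = cnj a" unfolding a_def using ip_cnj[of Psi v] dims by simp
  have "ip r (?S *\<^sub>v r) = (\<Sum>i<N. cnj (v $ i - a * Psi $ i) * ((?S *\<^sub>v v) $ i - a * of_real fv * Psi $ i))"
    by (simp only: Sr) (simp add: ip_def r_def)
  also have "\<dots> = (\<Sum>i<N. cnj (v $ i) * (?S *\<^sub>v v) $ i) - a * of_real fv * (\<Sum>i<N. cnj (v $ i) * Psi $ i)
      - cnj a * (\<Sum>i<N. cnj (Psi $ i) * (?S *\<^sub>v v) $ i) + cnj a * a * of_real fv * (\<Sum>i<N. cnj (Psi $ i) * Psi $ i)"
    by (simp add: algebra_simps sum_subtractf sum.distrib sum_distrib_left)
  also have "\<dots> = ip v (?S *\<^sub>v v) - a * of_real fv * ip v Psi - cnj a * ip Psi (?S *\<^sub>v v) + cnj a * a * of_real fv * ip Psi Psi"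
    unfolding ip_def using dims by simp
  also have "\<dots> = ip v (?S *\<^sub>v v) - of_real fv * (a * cnj a)"
    unfolding ipvP herm nPsi by (simp add: algebra_simps)
  finally have e: "ip r (?S *\<^sub>v r) = ip v (?S *\<^sub>v v) - of_real fv * (a * cnj a)" .
  have Gr: "ip r (?S *\<^sub>v r) = of_real (\<Sum>j\<in>J. w j * (cmod (ip (u j) r))^2)"
    using ip_qfm[OF Sc rc] mixm_qfm[OF u rc] by simp
  have Gv: "ip v (?S *\<^sub>v v) = of_real (\<Sum>j\<in>J. w j * (cmod (ip (u j) v))^2)"
    using ip_qfm[OF Sc v] mixm_qfm[OF u v] by simp
  have aa: "a * cnj a = of_real ((cmod a)^2)" by (rule complex_norm_square[symmetric])
  have "(\<Sum>j\<in>J. w j * (cmod (ip (u j) r))^2) = (\<Sum>j\<in>J. w j * (cmod (ip (u j) v))^2) - fv * (cmod a)^2"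
  proof -
    have "complex_of_real (\<Sum>j\<in>J. w j * (cmod (ip (u j) r))^2) = complex_of_real ((\<Sum>j\<in>J. w j * (cmod (ip (u j) v))^2) - fv * (cmod a)^2)"
      using e unfolding Gr Gv aa by simp
    then show ?thesis by (simp only: of_real_eq_iff)
  qed
  moreover have "(\<Sum>j\<in>J. w j * (cmod (ip (u j) r))^2) \<ge> 0" using w by (intro sum_nonneg) auto
  ultimately show ?thesis unfolding a_def by simp
qed


lemma log_part1:
  assumes q: "q \<ge> 1 / (1 + s)" and s: "s \<ge> 0"
  shows "ereal (- log 2 q) \<le> ereal (log 2 (1 + s))" "q > 0"
proof -
  have pos: "1 / (1 + s) > 0" using s by simp
  then show qp: "q > 0" using q by linarith
  have "log 2 (1 / (1 + s)) \<le> log 2 q" using q pos qp by simp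
  moreover have "log 2 (1 / (1 + s)) = - log 2 (1 + s)" using s by (simp add: log_divide)
  ultimately show "ereal (- log 2 q) \<le> ereal (log 2 (1 + s))" by simp
qed

lemma entry_alg:
  assumes s: "(s::real) > 0"
  shows "complex_of_real (1 / (1 + s)) * (r + complex_of_real s * (complex_of_real ((1 + s) / s) * x + complex_of_real (- 1 / s) * r)) = x"
proof -
  have a: "complex_of_real s * complex_of_real ((1 + s) / s) = complex_of_real (1 + s)"
    using s by (simp only: of_real_mult[symmetric]) simp
  have b: "complex_of_real s * complex_of_real (- 1 / s) = -1"
    using s by (simp only: of_real_mult[symmetric]) simp
  have c: "complex_of_real (1 / (1 + s)) * complex_of_real (1 + s) = 1"
    using s by (simp only: of_real_mult[symmetric]) simp
  have "complex_of_real s * (complex_of_real ((1 + s) / s) * x + complex_of_real (- 1 / s) * r)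
      = (complex_of_real s * complex_of_real ((1 + s) / s)) * x + (complex_of_real s * complex_of_real (- 1 / s)) * r"
    by (simp add: algebra_simps)
  also have "\<dots> = complex_of_real (1 + s) * x - r" unfolding a b by simp
  finally have "r + complex_of_real s * (complex_of_real ((1 + s) / s) * x + complex_of_real (- 1 / s) * r) = complex_of_real (1 + s) * x"
    by simp
  then show ?thesis using c by (simp add: mult.assoc[symmetric])
qed

lemma main_abstract:
  fixes Psi :: "complex vec" and I :: "'a set" and g :: "'a \<Rightarrow> complex mat"
  assumes d: "d > 0" and Psi: "Psi \<in> carrier_vec (d^m)" and nPsi: "ip Psi Psi = 1"
    and I: "finite I" "I \<noteq> {}" and gC: "\<forall>x\<in>I. g x \<in> clifford d m" and gfix: "\<forall>x\<in>I. g x *\<^sub>v Psi = Psi"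
    and gsum: "\<forall>i<d^m. \<forall>j<d^m. (\<Sum>x\<in>I. g x $$ (i,j)) = of_nat (card I) * proj_vec Psi $$ (i,j)"
  shows "D_min (d^m) (F_STAB d m) (proj_vec Psi) = D_max (d^m) (F_STAB d m) (proj_vec Psi)"
proof -
  define N where "N = d^m"
  let ?r = "proj_vec Psi"
  let ?F = "F_STAB d m"
  have PsiN: "Psi \<in> carrier_vec N" using Psi by (simp add: N_def)
  have rc: "?r \<in> carrier_mat N N" using PsiN by auto
  have supp: "supp_proj N ?r = ?r" by (rule supp_proj_proj[OF PsiN nPsi])
  have qr: "qfm ?r Psi = 1" using qfm_proj[OF PsiN PsiN] nPsi by simp
  have trr: "tr ?r = 1" by (rule tr_proj[OF PsiN nPsi])
  have le1: "D_min N ?F ?r \<le> D_max N ?F ?r"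
    unfolding D_max_def
  proof (rule INF_greatest)
    fix s assume "s \<in> {s. 0 \<le> s \<and> (\<exists>\<tau>. is_state N \<tau> \<and> complex_of_real (1 / (1 + s)) \<cdot>\<^sub>m (?r + complex_of_real s \<cdot>\<^sub>m \<tau>) \<in> ?F)}"
    then obtain \<tau> where s0: "s \<ge> 0" and ts: "is_state N \<tau>"
      and inF: "complex_of_real (1 / (1 + s)) \<cdot>\<^sub>m (?r + complex_of_real s \<cdot>\<^sub>m \<tau>) \<in> ?F" by blast
    let ?\<sigma> = "complex_of_real (1 / (1 + s)) \<cdot>\<^sub>m (?r + complex_of_real s \<cdot>\<^sub>m \<tau>)"
    have tp: "psd N \<tau>" using ts by (simp add: is_state_def)
    have tc: "\<tau> \<in> carrier_mat N N" using tp by (simp add: psd_def)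
    have seq: "?\<sigma> = mat N N (\<lambda>(i,l). of_real (1 / (1 + s)) * ?r $$ (i,l) + of_real (s / (1 + s)) * \<tau> $$ (i,l))"
      by (rule eq_matI) (use rc tc in \<open>auto simp: algebra_simps\<close>)
    have sc: "?\<sigma> \<in> carrier_mat N N" using rc tc by simp
    have "qfm ?\<sigma> Psi = of_real (1 / (1 + s)) * qfm ?r Psi + of_real (s / (1 + s)) * qfm \<tau> Psi"
      unfolding seq by (rule qfm_lin[OF PsiN])
    then have qs: "qfm ?\<sigma> Psi = of_real (1 / (1 + s)) + of_real (s / (1 + s)) * qfm \<tau> Psi" using qr by simp
    have t1: "Re (qfm \<tau> Psi) \<ge> 0" using psdD[OF tp PsiN] by simp
    define q where "q = Re (tr (supp_proj N ?r * ?\<sigma>))"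
    have "q = Re (qfm ?\<sigma> Psi)" unfolding q_def supp tr_proj_mult[OF PsiN sc] ..
    also have "\<dots> = 1 / (1 + s) + s / (1 + s) * Re (qfm \<tau> Psi)" unfolding qs by simp
    finally have qv: "q = 1 / (1 + s) + s / (1 + s) * Re (qfm \<tau> Psi)" .
    have "s / (1 + s) * Re (qfm \<tau> Psi) \<ge> 0" using s0 t1 by simp
    then have qge: "q \<ge> 1 / (1 + s)" using qv by linarith
    have "D_min N ?F ?r \<le> (let q = Re (tr (supp_proj N ?r * ?\<sigma>)) in if 0 < q then ereal (- log 2 q) else \<infinity>)"
      unfolding D_min_def by (rule INF_lower[OF inF])
    also have "\<dots> = ereal (- log 2 q)" using log_part1(2)[OF qge s0] unfolding q_def Let_def by simp
    also have "\<dots> \<le> ereal (log 2 (1 + s))" by (rule log_part1(1)[OF qge s0])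
    finally show "D_min N ?F ?r \<le> ereal (log 2 (1 + s))" .
  qed
  have le2: "D_max N ?F ?r \<le> D_min N ?F ?r"
    unfolding D_min_def
  proof (rule INF_greatest)
    fix \<sigma> assume sF: "\<sigma> \<in> ?F"
    obtain K and p :: "nat \<Rightarrow> real" and vs where pv: "\<forall>k<K. p k \<ge> 0 \<and> vs k \<in> stab_vecs d m"
      and ps: "(\<Sum>k<K. p k) = 1" and se: "\<sigma> = mixm (d^m) {..<K} p vs"
      using F_STAB_cases[OF sF] by blast
    have vsc: "\<forall>k<K. vs k \<in> carrier_vec N \<and> ip (vs k) (vs k) = 1"
      using pv stab_vec_props[OF d] by (auto simp: N_def)
    define fv where "fv = (\<Sum>k<K. p k * (cmod (ip (vs k) Psi))^2)"
    have "tr (supp_proj N ?r * \<sigma>) = qfm \<sigma> Psi" unfolding supp using tr_proj_mult[OF PsiN] se by (simp add: N_def)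
    also have "\<dots> = of_real fv" unfolding se fv_def using mixm_qfm[of "{..<K}" vs N Psi p] vsc PsiN by (simp add: N_def)
    finally have qfv: "Re (tr (supp_proj N ?r * \<sigma>)) = fv" by simp
    show "D_max N ?F ?r \<le> (let q = Re (tr (supp_proj N ?r * \<sigma>)) in if 0 < q then ereal (- log 2 q) else \<infinity>)"
    proof (cases "fv > 0")
      case False
      then show ?thesis unfolding qfv Let_def by simp
    next
      case True
      define M where "M = card I"
      have Mpos: "M > 0" using I unfolding M_def by (simp add: card_gt_0_iff)
      define J where "J = I \<times> {..<K}"
      define w where "w = (\<lambda>(x::'a,k::nat). p k / real M)"
      define u where "u = (\<lambda>(x::'a,k::nat). g x *\<^sub>v vs k)"
      define S where "S = mixm N J w u"
      have gc: "\<forall>x\<in>I. g x \<in> carrier_mat N N" using gC clifford_carrier unfolding N_def by blast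
      have gadj: "\<forall>x\<in>I. adj (g x) *\<^sub>v Psi = Psi"
        using gC gfix adj_fix[OF _ PsiN] unfolding N_def clifford_def by blast
      have Jfin: "finite J" unfolding J_def using I by simp
      have ustab: "\<forall>j\<in>J. u j \<in> stab_vecs d m"
        unfolding J_def u_def using gC pv stab_vec_clifford by auto
      have uc: "\<forall>j\<in>J. u j \<in> carrier_vec N \<and> ip (u j) (u j) = 1"
        using ustab stab_vec_props[OF d] by (auto simp: N_def)
      have uc': "\<forall>j\<in>J. u j \<in> carrier_vec N" using uc by blast
      have w0: "\<forall>j\<in>J. w j \<ge> 0" unfolding J_def w_def using pv by auto
      have sumw: "sum w J = 1"
      proof -
        have cp: "(\<Sum>x\<in>I. \<Sum>k<K. w (x,k)) = (\<Sum>(x,k)\<in>I \<times> {..<K}. w (x,k))"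
          by (rule sum.cartesian_product)
        have "sum w J = (\<Sum>x\<in>I. \<Sum>k<K. w (x,k))" unfolding cp J_def by simp
        also have "\<dots> = (\<Sum>x\<in>I. \<Sum>k<K. p k / real M)" unfolding w_def by simp
        also have "\<dots> = (\<Sum>x\<in>I. (\<Sum>k<K. p k) / real M)" by (simp add: sum_divide_distrib)
        also have "\<dots> = real M * (1 / real M)" using ps unfolding M_def by simp
        also have "\<dots> = 1" using Mpos by simp
        finally show ?thesis .
      qed
      have SF: "S \<in> ?F" unfolding S_def N_def
        by (rule F_STAB_mixm[OF Jfin]) (use w0 ustab sumw in auto)
      have Sfix: "S *\<^sub>v Psi = vec N (\<lambda>i. of_real fv * Psi $ i)"
        unfolding S_def J_def w_def u_def fv_def M_def
        by (rule twirl_fix) (use I gc gadj gsum PsiN vsc in \<open>auto simp: N_def card_gt_0_iff\<close>)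
      have lower: "(\<Sum>j\<in>J. w j * (cmod (ip (u j) v))^2) \<ge> fv * (cmod (ip Psi v))^2" if v: "v \<in> carrier_vec N" for v
        by (rule mix_lower[OF uc' w0 PsiN nPsi _ v]) (use Sfix in \<open>simp add: S_def\<close>)
      have Sc: "S \<in> carrier_mat N N" unfolding S_def by simp
      have qS: "qfm S v = of_real (\<Sum>j\<in>J. w j * (cmod (ip (u j) v))^2)" if v: "v \<in> carrier_vec N" for v
        unfolding S_def by (rule mixm_qfm[OF uc' v])
      have trS0: "tr S = of_real (sum w J)" unfolding S_def by (rule mixm_tr[OF uc])
      have trS: "tr S = 1" unfolding trS0 sumw by simp
      have fv1: "fv \<le> 1"
      proof -
        have "1 = Re (tr S)" using trS by simp
        also have "\<dots> = (\<Sum>i<N. Re (S $$ (i,i)))" unfolding tr_def using Sc by simp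
        also have "\<dots> = (\<Sum>i<N. (\<Sum>j\<in>J. w j * (cmod (ip (u j) (unit_vec N i)))^2))"
        proof (rule sum.cong[OF refl])
          fix i assume "i \<in> {..<N}"
          then have i: "i < N" by simp
          have ec: "(unit_vec N i :: complex vec) \<in> carrier_vec N" by simp
          have "S $$ (i,i) = qfm S (unit_vec N i)" by (rule qfm_unit[OF Sc i, symmetric])
          also have "\<dots> = of_real (\<Sum>j\<in>J. w j * (cmod (ip (u j) (unit_vec N i)))^2)" by (rule qS[OF ec])
          finally show "Re (S $$ (i,i)) = (\<Sum>j\<in>J. w j * (cmod (ip (u j) (unit_vec N i)))^2)" by (simp only: Re_complex_of_real)
        qed
        also have "\<dots> \<ge> (\<Sum>i<N. fv * (cmod (ip Psi (unit_vec N i)))^2)"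
        proof (rule sum_mono)
          fix i assume "i \<in> {..<N}"
          have ec: "(unit_vec N i :: complex vec) \<in> carrier_vec N" by simp
          show "fv * (cmod (ip Psi (unit_vec N i)))^2 \<le> (\<Sum>j\<in>J. w j * (cmod (ip (u j) (unit_vec N i)))^2)"
            by (rule lower[OF ec])
        qed
        also have "(\<Sum>i<N. fv * (cmod (ip Psi (unit_vec N i)))^2) = fv * (\<Sum>i<N. (cmod (Psi $ i))^2)"
          using PsiN by (simp add: ip_unit_right sum_distrib_left)
        also have "(\<Sum>i<N. (cmod (Psi $ i))^2) = 1"
        proof -
          have "complex_of_real (\<Sum>i<N. (cmod (Psi $ i))^2) = 1" using ip_self_real[OF PsiN] nPsi by simp
          then show ?thesis by (simp only: of_real_eq_1_iff)
        qed
        finally show ?thesis by simp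
      qed
      have "D_max N ?F ?r \<le> ereal (- log 2 fv)"
      proof (rule ereal_le_epsilon2)
        fix e :: real assume e: "e > 0"
        define s where "s = 2 powr (- log 2 fv + e) - 1"
        have lfv: "- log 2 fv \<ge> 0" using fv1 True by simp
        have ps1: "1 + s = 2 powr (- log 2 fv + e)" unfolding s_def by simp
        have "2 powr (- log 2 fv + e) > 1" using lfv e by (simp add: powr_less_cancel_iff[of 2 0, simplified])
        then have spos: "s > 0" using ps1 by simp
        have "2 powr (- log 2 fv + e) \<ge> 2 powr (- log 2 fv)" using e by simp
        also have "2 powr (- log 2 fv) = 1 / fv" using True by (simp add: powr_minus_divide)
        finally have sfv: "(1 + s) * fv \<ge> 1" using ps1 True by (simp add: field_simps)
        define \<tau> where "\<tau> = mat N N (\<lambda>(i,l). of_real ((1 + s) / s) * S $$ (i,l) + of_real (- 1 / s) * ?r $$ (i,l))"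
        have tc: "\<tau> \<in> carrier_mat N N" unfolding \<tau>_def by simp
        have tpsd: "psd N \<tau>"
        proof (rule psdI[OF tc])
          fix v :: "complex vec" assume v: "v \<in> carrier_vec N"
          let ?G = "\<Sum>j\<in>J. w j * (cmod (ip (u j) v))^2"
          let ?a = "(cmod (ip Psi v))^2"
          have "qfm \<tau> v = of_real ((1 + s) / s) * qfm S v + of_real (- 1 / s) * qfm ?r v"
            unfolding \<tau>_def by (rule qfm_lin[OF v])
          also have "\<dots> = of_real ((1 + s) / s * ?G + (- 1 / s) * ?a)"
            using qS[OF v] qfm_proj[OF PsiN v] by simp
          also have "(1 + s) / s * ?G + (- 1 / s) * ?a = ((1 + s) * ?G - ?a) / s"
            using spos by (simp add: field_simps)
          finally have qt: "qfm \<tau> v = of_real (((1 + s) * ?G - ?a) / s)" .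
          have "(1 + s) * ?G \<ge> (1 + s) * (fv * ?a)" using lower[OF v] spos by simp
          moreover have "(1 + s) * (fv * ?a) \<ge> ?a"
          proof -
            have "1 * ?a \<le> ((1 + s) * fv) * ?a" by (rule mult_right_mono[OF sfv]) simp
            then show ?thesis by (simp add: mult.assoc)
          qed
          ultimately have "(1 + s) * ?G - ?a \<ge> 0" by linarith
          then have "((1 + s) * ?G - ?a) / s \<ge> 0" using spos by (rule divide_nonneg_pos)
          then show "Im (qfm \<tau> v) = 0 \<and> Re (qfm \<tau> v) \<ge> 0" unfolding qt by simp
        qed
        have ttr: "tr \<tau> = 1"
        proof -
          have "tr \<tau> = of_real ((1 + s) / s) * tr S + of_real (- 1 / s) * tr ?r"
            unfolding \<tau>_def by (rule tr_lin[OF Sc rc])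
          also have "\<dots> = 1" unfolding trS trr using spos by (simp add: field_simps)
          finally show ?thesis .
        qed
        have eqS: "complex_of_real (1 / (1 + s)) \<cdot>\<^sub>m (?r + complex_of_real s \<cdot>\<^sub>m \<tau>) = S"
        proof (rule eq_matI)
          fix i l assume "i < dim_row S" "l < dim_col S"
          then have i: "i < N" and l: "l < N" using Sc by auto
          have "(complex_of_real (1 / (1 + s)) \<cdot>\<^sub>m (?r + complex_of_real s \<cdot>\<^sub>m \<tau>)) $$ (i,l)
             = complex_of_real (1 / (1 + s)) * (?r $$ (i,l) + complex_of_real s * (complex_of_real ((1 + s) / s) * S $$ (i,l) + complex_of_real (- 1 / s) * ?r $$ (i,l)))"
            using i l rc unfolding \<tau>_def by simp
          also have "\<dots> = S $$ (i,l)" by (rule entry_alg[OF spos])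
          finally show "(complex_of_real (1 / (1 + s)) \<cdot>\<^sub>m (?r + complex_of_real s \<cdot>\<^sub>m \<tau>)) $$ (i,l) = S $$ (i,l)" .
        qed (use rc tc Sc in auto)
        have "s \<in> {s. 0 \<le> s \<and> (\<exists>\<tau>. is_state N \<tau> \<and> complex_of_real (1 / (1 + s)) \<cdot>\<^sub>m (?r + complex_of_real s \<cdot>\<^sub>m \<tau>) \<in> ?F)}"
          using spos tpsd ttr eqS SF unfolding is_state_def by auto
        then have "D_max N ?F ?r \<le> ereal (log 2 (1 + s))" unfolding D_max_def by (rule INF_lower)
        also have "log 2 (1 + s) = - log 2 fv + e" unfolding ps1 by simp
        finally show "D_max N ?F ?r \<le> ereal (- log 2 fv) + ereal e" by simp
      qed
      then show ?thesis unfolding qfv Let_def using True by simp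
    qed
  qed
  show ?thesis using le1 le2 unfolding N_def by (rule antisym)
qed


lemma conj_entry:
  assumes A: "A \<in> carrier_mat N N" and B: "B \<in> carrier_mat N N" and i: "i < N" and j: "j < N"
  shows "(A * B * adj A) $$ (i,j) = (\<Sum>a<N. \<Sum>b<N. A $$ (i,a) * B $$ (a,b) * cnj (A $$ (j,b)))"
proof -
  have "(A * B * adj A) $$ (i,j) = (\<Sum>b<N. (A * B) $$ (i,b) * adj A $$ (b,j))"
    using A B i j by (subst mult_entry) auto
  also have "\<dots> = (\<Sum>b<N. (\<Sum>a<N. A $$ (i,a) * B $$ (a,b)) * cnj (A $$ (j,b)))"
    using A B i j by (intro sum.cong refl) (subst mult_entry, auto)
  also have "\<dots> = (\<Sum>b<N. \<Sum>a<N. A $$ (i,a) * B $$ (a,b) * cnj (A $$ (j,b)))"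
    by (simp add: sum_distrib_right)
  also have "\<dots> = (\<Sum>a<N. \<Sum>b<N. A $$ (i,a) * B $$ (a,b) * cnj (A $$ (j,b)))"
    by (rule sum.swap)
  finally show ?thesis .
qed

lemma unitary_ip: assumes U: "unitary N U" and u: "u \<in> carrier_vec N"
  shows "ip (U *\<^sub>v u) (U *\<^sub>v u) = ip u u"
proof -
  have Uc: "U \<in> carrier_mat N N" using U by (simp add: unitary_def)
  have "ip (U *\<^sub>v u) (U *\<^sub>v u) = ip u (adj U *\<^sub>v (U *\<^sub>v u))"
    by (rule ip_adj[OF Uc u]) (use Uc u in simp)
  also have "adj U *\<^sub>v (U *\<^sub>v u) = (adj U * U) *\<^sub>v u"
    using assoc_mult_mat_vec[OF adj_carrier[OF Uc] Uc u] by simp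
  also have "adj U * U = 1\<^sub>m N" using U by (simp add: unitary_def)
  also have "1\<^sub>m N *\<^sub>v u = u" by (rule one_mult_mat_vec[OF u])
  finally show ?thesis .
qed

lemma divmod_aux: "(b::nat) < n \<Longrightarrow> (a * n + b) div n = a \<and> (a * n + b) mod n = b"
  by auto

lemma ip_vkron: assumes "dim_vec u = dim_vec u'" "dim_vec v = dim_vec v'"
  shows "ip (vkron u v) (vkron u' v') = ip u u' * ip v v'"
proof -
  have "ip (vkron u v) (vkron u' v') = (\<Sum>k<dim_vec u * dim_vec v. cnj (vkron u v $ k) * vkron u' v' $ k)"
    unfolding ip_def by simp
  also have "\<dots> = (\<Sum>a<dim_vec u. \<Sum>b<dim_vec v. cnj (vkron u v $ (a * dim_vec v + b)) * vkron u' v' $ (a * dim_vec v + b))"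
    by (rule sum_div_mod_split)
  also have "\<dots> = (\<Sum>a<dim_vec u. \<Sum>b<dim_vec v. (cnj (u $ a) * u' $ a) * (cnj (v $ b) * v' $ b))"
  proof (intro sum.cong refl)
    fix a b assume a: "a \<in> {..<dim_vec u}" and b: "b \<in> {..<dim_vec v}"
    have kk: "a * dim_vec v + b < dim_vec u * dim_vec v" using a b
      by (metis lessThan_iff add.commute add_less_cancel_left mult.commute mult_Suc_right
            mult_le_mono2 order_less_le_trans Suc_leI)
    have d1: "(a * dim_vec v + b) div dim_vec v = a" and d2: "(a * dim_vec v + b) mod dim_vec v = b"
      using divmod_aux[of b "dim_vec v" a] b by auto
    show "cnj (vkron u v $ (a * dim_vec v + b)) * vkron u' v' $ (a * dim_vec v + b) = (cnj (u $ a) * u' $ a) * (cnj (v $ b) * v' $ b)"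
    proof -
      have d1': "(a * dim_vec v + b) div dim_vec v' = a" and d2': "(a * dim_vec v + b) mod dim_vec v' = b"
        using d1 d2 assms by auto
      have kk': "a * dim_vec v + b < dim_vec u' * dim_vec v'" using kk assms by simp
      show ?thesis
        using vkron_index[OF kk, of] vkron_index[OF kk'] d1 d2 d1' d2' by (simp add: mult_ac)
    qed
  qed
  also have "\<dots> = ip u u' * ip v v'" unfolding ip_def by (simp add: sum_product)
  finally show ?thesis .
qed

lemma ip_vkron_pow: assumes "ip v v = 1" shows "ip (vkron_pow v n) (vkron_pow v n) = 1"
proof (induction n)
  case 0
  show ?case unfolding ip_def by simp
next
  case (Suc n)
  then show ?case using assms by (simp add: ip_vkron)
qed

lemma clifford_one: "1\<^sub>m 1 \<in> clifford d 0"
proof -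
  have u: "unitary (d^0) (1\<^sub>m 1)" by (simp add: unitary_def)
  have "1\<^sub>m 1 * P * adj (1\<^sub>m 1) = P" if "P \<in> pauli_group d 0" for P
  proof -
    have "P \<in> carrier_mat 1 1" using pauli_group_carrier[OF that] by simp
    then show ?thesis by simp
  qed
  then show ?thesis using u by (simp add: clifford_def)
qed

lemma kfold_clifford: "(\<forall>x\<in>set xs. f x \<in> clifford d t) \<Longrightarrow> kfold f xs \<in> clifford d (t * length xs)"
proof (induction xs)
  case Nil then show ?case using clifford_one by simp
next
  case (Cons x xs)
  then have "kron (f x) (kfold f xs) \<in> clifford d (t + t * length xs)" by (intro clifford_kron) auto
  then show ?case by simp
qed


lemma single_copy:
  assumes d: "d > 0" and V: "V \<in> clifford_level3 d t" and C: "C \<in> clifford d t"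
  defines "W \<equiv> V * C"
  defines "h \<equiv> (\<lambda>bs. W * DZ d bs * adj W)"
  shows "\<forall>bs\<in>lists_n {..<d} t. h bs \<in> clifford d t"
    and "\<forall>bs\<in>lists_n {..<d} t. h bs *\<^sub>v (W *\<^sub>v unit_vec (d^t) 0) = W *\<^sub>v unit_vec (d^t) 0"
    and "\<forall>i<d^t. \<forall>j<d^t. (\<Sum>bs\<in>lists_n {..<d} t. h bs $$ (i,j)) = of_nat d ^ t * proj_vec (W *\<^sub>v unit_vec (d^t) 0) $$ (i,j)"
    and "unitary (d^t) W"
proof -
  let ?N = "d^t"
  have VU: "unitary ?N V" using V by (simp add: clifford_level3_def)
  have CU: "unitary ?N C" using C by (simp add: clifford_def)
  have Vc: "V \<in> carrier_mat ?N ?N" using VU by (simp add: unitary_def)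
  have Cc: "C \<in> carrier_mat ?N ?N" using CU by (simp add: unitary_def)
  have WU: "unitary ?N W" unfolding W_def by (rule unitary_mult[OF VU CU])
  then show "unitary ?N W" .
  have Wc: "W \<in> carrier_mat ?N ?N" using WU by (simp add: unitary_def)
  have DZc: "DZ d bs \<in> carrier_mat ?N ?N" if bs: "bs \<in> lists_n {..<d} t" for bs
    using DZ_carrier[of bs d] lists_n_set[OF bs] by simp
  show "\<forall>bs\<in>lists_n {..<d} t. h bs \<in> clifford d t"
  proof
    fix bs assume bs: "bs \<in> lists_n {..<d} t"
    have "DZ d bs \<in> pauli_group d t"
      unfolding DZ_pauli by (rule pauli_string_in_group) (use lists_n_set[OF bs] in simp)
    then have "C * DZ d bs * adj C \<in> pauli_group d t" using C by (simp add: clifford_def)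
    then have "V * (C * DZ d bs * adj C) * adj V \<in> clifford d t" using V by (simp add: clifford_level3_def)
    then show "h bs \<in> clifford d t" unfolding h_def W_def using conj_prod[OF Vc Cc DZc[OF bs]] by simp
  qed
  have e: "(unit_vec ?N 0 :: complex vec) \<in> carrier_vec ?N" by simp
  show "\<forall>bs\<in>lists_n {..<d} t. h bs *\<^sub>v (W *\<^sub>v unit_vec ?N 0) = W *\<^sub>v unit_vec ?N 0"
  proof
    fix bs assume bs: "bs \<in> lists_n {..<d} t"
    have D: "DZ d bs \<in> carrier_mat ?N ?N" by (rule DZc[OF bs])
    have aW: "adj W \<in> carrier_mat ?N ?N" using Wc by simp
    have "h bs *\<^sub>v (W *\<^sub>v unit_vec ?N 0) = (W * DZ d bs * adj W * W) *\<^sub>v unit_vec ?N 0"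
      unfolding h_def using assoc_mult_mat_vec[OF mult_carrier_mat[OF mult_carrier_mat[OF Wc D] aW] Wc e] by simp
    also have "W * DZ d bs * adj W * W = W * DZ d bs * (adj W * W)"
      by (rule assoc_mult_mat[OF mult_carrier_mat[OF Wc D] aW Wc])
    also have "adj W * W = 1\<^sub>m ?N" using WU by (simp add: unitary_def)
    also have "W * DZ d bs * 1\<^sub>m ?N = W * DZ d bs" by (rule right_mult_one_mat[OF mult_carrier_mat[OF Wc D]])
    also have "(W * DZ d bs) *\<^sub>v unit_vec ?N 0 = W *\<^sub>v (DZ d bs *\<^sub>v unit_vec ?N 0)"
      by (rule assoc_mult_mat_vec[OF Wc D e])
    also have "DZ d bs *\<^sub>v unit_vec ?N 0 = unit_vec ?N 0"
      using DZ_e0[OF d, of bs] lists_n_set(2)[OF bs] by simp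
    finally show "h bs *\<^sub>v (W *\<^sub>v unit_vec ?N 0) = W *\<^sub>v unit_vec ?N 0" .
  qed
  show "\<forall>i<?N. \<forall>j<?N. (\<Sum>bs\<in>lists_n {..<d} t. h bs $$ (i,j)) = of_nat d ^ t * proj_vec (W *\<^sub>v unit_vec ?N 0) $$ (i,j)"
  proof (intro allI impI)
    fix i j assume i: "i < ?N" and j: "j < ?N"
    have N0: "0 < ?N" using d by simp
    have "(\<Sum>bs\<in>lists_n {..<d} t. h bs $$ (i,j))
        = (\<Sum>bs\<in>lists_n {..<d} t. \<Sum>a<?N. \<Sum>b<?N. W $$ (i,a) * DZ d bs $$ (a,b) * cnj (W $$ (j,b)))"
    proof (rule sum.cong[OF refl])
      fix bs assume bs: "bs \<in> lists_n {..<d} t"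
      show "h bs $$ (i,j) = (\<Sum>a<?N. \<Sum>b<?N. W $$ (i,a) * DZ d bs $$ (a,b) * cnj (W $$ (j,b)))"
        unfolding h_def by (rule conj_entry[OF Wc DZc[OF bs] i j])
    qed
    also have "\<dots> = (\<Sum>a<?N. \<Sum>b<?N. W $$ (i,a) * (\<Sum>bs\<in>lists_n {..<d} t. DZ d bs $$ (a,b)) * cnj (W $$ (j,b)))"
      by (simp add: sum.swap[of _ "lists_n {..<d} t"] sum_distrib_left sum_distrib_right)
    also have "\<dots> = (\<Sum>a<?N. \<Sum>b<?N. W $$ (i,a) * (of_nat d ^ t * ((if a = 0 then 1 else 0) * (if b = 0 then 1 else 0))) * cnj (W $$ (j,b)))"
      using DZ_sum[OF d, of t] N0 by (auto simp: proj_vec_index unit_vec_def intro!: sum.cong)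
    also have "\<dots> = (\<Sum>a<?N. (if a = 0 then 1 else 0) * (\<Sum>b<?N. (W $$ (i,a) * of_nat d ^ t * cnj (W $$ (j,b))) * (if b = 0 then 1 else 0)))"
      by (simp add: sum_distrib_left mult_ac)
    also have "\<dots> = (\<Sum>a<?N. (if a = 0 then 1 else 0) * (W $$ (i,a) * of_nat d ^ t * cnj (W $$ (j,0))))"
      using N0 by (simp add: delta_r)
    also have "\<dots> = W $$ (i,0) * of_nat d ^ t * cnj (W $$ (j,0))"
      using N0 by (simp add: delta_l)
    also have "\<dots> = of_nat d ^ t * proj_vec (W *\<^sub>v unit_vec ?N 0) $$ (i,j)"
      using i j N0 Wc mult_unit_vec_entry[OF Wc i N0] mult_unit_vec_entry[OF Wc j N0]
      by (simp add: proj_vec_index)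
    finally show "(\<Sum>bs\<in>lists_n {..<d} t. h bs $$ (i,j)) = of_nat d ^ t * proj_vec (W *\<^sub>v unit_vec ?N 0) $$ (i,j)" .
  qed
qed

theorem proposition5:
  fixes d t :: nat and V :: "complex mat" and \<phi> :: "complex vec"
  assumes "d = 2 \<or> (prime d \<and> odd d)"
    and "t \<ge> 1"
    and "V \<in> clifford_level3 d t"
    and "\<phi> \<in> stab_vecs d t"
  shows "\<forall>n::nat. n \<ge> 1 \<longrightarrow>
     (let \<psi> = V *\<^sub>v \<phi>; \<rho> = kron_pow (proj_vec \<psi>) n in
       D_min (d ^ (t * n)) (F_STAB d (t * n)) \<rho> = D_max (d ^ (t * n)) (F_STAB d (t * n)) \<rho>)"
proof (intro allI impI)
  fix n :: nat assume n: "n \<ge> 1"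
  have d: "d > 0"
  proof (rule ccontr)
    assume "\<not> d > 0"
    then have "d = 0" by simp
    with assms(1) show False by simp
  qed
  obtain C where C: "C \<in> clifford d t" and pe: "\<phi> = C *\<^sub>v unit_vec (d^t) 0"
    using assms(4) unfolding stab_vecs_def by blast
  define W where "W = V * C"
  define h where "h = (\<lambda>bs. W * DZ d bs * adj W)"
  have sc: "\<forall>bs\<in>lists_n {..<d} t. h bs \<in> clifford d t"
    "\<forall>bs\<in>lists_n {..<d} t. h bs *\<^sub>v (W *\<^sub>v unit_vec (d^t) 0) = W *\<^sub>v unit_vec (d^t) 0"
    "\<forall>i<d^t. \<forall>j<d^t. (\<Sum>bs\<in>lists_n {..<d} t. h bs $$ (i,j)) = of_nat d ^ t * proj_vec (W *\<^sub>v unit_vec (d^t) 0) $$ (i,j)"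
    "unitary (d^t) W"
    unfolding h_def W_def by (rule single_copy[OF d assms(3) C])+
  have VU: "unitary (d^t) V" using assms(3) by (simp add: clifford_level3_def)
  have Vc: "V \<in> carrier_mat (d^t) (d^t)" using VU by (simp add: unitary_def)
  have Cc: "C \<in> carrier_mat (d^t) (d^t)" using C by (rule clifford_carrier)
  have e: "(unit_vec (d^t) 0 :: complex vec) \<in> carrier_vec (d^t)" by simp
  define \<psi> where "\<psi> = V *\<^sub>v \<phi>"
  have psiW: "\<psi> = W *\<^sub>v unit_vec (d^t) 0"
    unfolding \<psi>_def pe W_def using assoc_mult_mat_vec[OF Vc Cc e] by simp
  have Wc: "W \<in> carrier_mat (d^t) (d^t)" using sc(4) by (simp add: unitary_def)
  have psic: "\<psi> \<in> carrier_vec (d^t)" unfolding psiW using Wc by simp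
  have npsi: "ip \<psi> \<psi> = 1" unfolding psiW unitary_ip[OF sc(4) e] using d by (intro ip_unit) simp
  define A where "A = lists_n {..<d::nat} t"
  define I where "I = lists_n A n"
  define Psi where "Psi = vkron_pow \<psi> n"
  have finA: "finite A" unfolding A_def by (rule lists_n_finite) simp
  have cardA: "card A = d^t" unfolding A_def using lists_n_card[of "{..<d}" t] by simp
  have finI: "finite I" unfolding I_def by (rule lists_n_finite[OF finA])
  have cardI: "card I = (d^t)^n" unfolding I_def by (simp add: lists_n_card[OF finA] cardA)
  have "card I > 0" unfolding cardI using d by simp
  then have Ine: "I \<noteq> {}" by auto
  have Psic: "Psi \<in> carrier_vec (d^(t*n))" unfolding Psi_def
    by (rule carrier_vecI) (use psic in \<open>simp add: power_mult\<close>)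
  have nPsi: "ip Psi Psi = 1" unfolding Psi_def by (rule ip_vkron_pow[OF npsi])
  have hc: "\<forall>a\<in>A. h a \<in> carrier_mat (d^t) (d^t)" using sc(1) clifford_carrier unfolding A_def by blast
  have gC: "\<forall>x\<in>I. kfold h x \<in> clifford d (t*n)"
  proof
    fix x assume x: "x \<in> I"
    have "kfold h x \<in> clifford d (t * length x)"
      by (rule kfold_clifford) (use sc(1) lists_n_set(1)[OF x[unfolded I_def]] in \<open>auto simp: A_def\<close>)
    then show "kfold h x \<in> clifford d (t*n)" using lists_n_set(2)[OF x[unfolded I_def]] by simp
  qed
  have gfix: "\<forall>x\<in>I. kfold h x *\<^sub>v Psi = Psi"
  proof
    fix x assume x: "x \<in> I"
    have "kfold h x *\<^sub>v vkron_pow \<psi> (length x) = vkron_pow \<psi> (length x)"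
      by (rule kfold_fix[OF _ psic]) (use sc(2) hc lists_n_set(1)[OF x[unfolded I_def]] psiW in \<open>auto simp: A_def\<close>)
    then show "kfold h x *\<^sub>v Psi = Psi" unfolding Psi_def using lists_n_set(2)[OF x[unfolded I_def]] by simp
  qed
  have Pc: "proj_vec \<psi> \<in> carrier_mat (d^t) (d^t)" using psic by auto
  have ks: "\<forall>i<(d^t)^n. \<forall>j<(d^t)^n. (\<Sum>xs\<in>lists_n A n. kfold h xs $$ (i,j)) = (of_nat d ^ t)^n * kron_pow (proj_vec \<psi>) n $$ (i,j)"
    by (rule kfold_sum[OF finA hc Pc]) (use sc(3) psiW in \<open>auto simp: A_def\<close>)
  have gsum: "\<forall>i<d^(t*n). \<forall>j<d^(t*n). (\<Sum>x\<in>I. kfold h x $$ (i,j)) = of_nat (card I) * proj_vec Psi $$ (i,j)"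
    using ks unfolding I_def[symmetric] cardI Psi_def kron_pow_proj by (simp add: power_mult)
  have main: "D_min (d^(t*n)) (F_STAB d (t*n)) (proj_vec Psi) = D_max (d^(t*n)) (F_STAB d (t*n)) (proj_vec Psi)"
    by (rule main_abstract[OF d Psic nPsi finI Ine gC gfix gsum])
  have "kron_pow (proj_vec \<psi>) n = proj_vec Psi" unfolding Psi_def by (rule kron_pow_proj)
  then show "let \<psi> = V *\<^sub>v \<phi>; \<rho> = kron_pow (proj_vec \<psi>) n in
       D_min (d ^ (t * n)) (F_STAB d (t * n)) \<rho> = D_max (d ^ (t * n)) (F_STAB d (t * n)) \<rho>"
    unfolding Let_def \<psi>_def[symmetric] using main by simp
qed


end
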